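(* Assume the setting below and suppose there are constants $C,a>0$ with $|\psi(x)|\le Ce^{-a|x|}$ for all $x\in\mathbb R$. Then for every $\lambda\in\mathbb C\setminus\sigma_{\mathrm{ess}}(\mathcal L)$ the Birman–Schwinger operator $\mathcal K(\lambda)$ is Hilbert–Schmidt on $L^2(\mathbb R,\mathbb C^4)$, and its matrix-valued kernel is $$\mathbf K(x,y;\lambda)=\begin{cases}-\mathbf R_r(x)\mathbf Q(\lambda)e^{\mathbf A_\infty(\lambda)(x-y)}\mathbf Q(\lambda)\mathbf R_\ell(y),& x\ge y,\\ \mathbf R_r(x)(\mathbf I-\mathbf Q(\lambda))e^{\mathbf A_\infty(\lambda)(x-y)}(\mathbf I-\mathbf Q(\lambda))\mathbf R_\ell(y),& x<y.\end{cases}$$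
   Context: Setting. Fix real parameters $D,\beta,\delta,\alpha,\epsilon,\gamma,\mu,\nu$ with $\beta\ge0$, $(D,\beta)\neq(0,0)$. Let $\mathbf B=\begin{bmatrix}\beta&-D/2\\ D/2&\beta\end{bmatrix}$, $\mathbf N_0=\begin{bmatrix}\delta&-\alpha\\ \alpha&\delta\end{bmatrix}$, $\mathbf N_1=\begin{bmatrix}\epsilon&-\gamma\\ \gamma&\epsilon\end{bmatrix}$, $\mathbf N_2=\begin{bmatrix}\mu&-\nu\\ \nu&\mu\end{bmatrix}$. Let $\psi:\mathbb R\to\mathbb C$ be a stationary pulse of the cubic–quintic complex Ginzburg–Landau equation $i\Psi_t+\frac D2\Psi_{xx}+\gamma|\Psi|^2\Psi+\nu|\Psi|^4\Psi=i\delta\Psi+i\epsilon|\Psi|^2\Psi+i\beta\Psi_{xx}+i\mu|\Psi|^4\Psi$ ($\Psi=e^{-i\alpha t}\psi(x)$ is a solution), $\boldsymbol\psi=[\operatorname{Re}\psi\ \operatorname{Im}\psi]^T$, $|\boldsymbol\psi|=\|\boldsymbol\psi(x)\|_2$. Let $\mathbf M(x)=\mathbf N_1|\boldsymbol\psi|^2+\mathbf N_2|\boldsymbol\psi|^4+(2\mathbf N_1+4\mathbf N_2|\boldsymbol\psi|^2)\boldsymbol\psi\boldsymbol\psi^T$ and $\mathcal L=\mathbf B\partial_x^2+\mathbf N_0+\mathbf M(x)$ on $H^2(\mathbb R,\mathbb C^2)$; $\sigma_{\mathrm{ess}}(\mathcal L)=\{(\delta\pm i\alpha)-s^2(\beta\pm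 iD/2):s\in\mathbb R\}$. For $\lambda\notin\sigma_{\mathrm{ess}}(\mathcal L)$: $\mathbf A_\infty(\lambda)=\begin{bmatrix}\mathbf 0&\mathbf I\\ \mathbf B^{-1}(\lambda\mathbf I-\mathbf N_0)&\mathbf 0\end{bmatrix}\in\mathbb C^{4\times4}$ (no purely imaginary eigenvalues), $\mathbf Q(\lambda)$ the spectral projection onto its stable subspace. With a polar decomposition $\mathbf M=\mathbf V|\mathbf M|$, $|\mathbf M|=(\mathbf M^*\mathbf M)^{1/2}$, let $\mathbf R_\ell(x)=\begin{bmatrix}\mathbf 0&\mathbf 0\\ -\mathbf B^{-1}\mathbf V(x)|\mathbf M(x)|^{1/2}&\mathbf 0\end{bmatrix}$, $\mathbf R_r(x)=\begin{bmatrix}|\mathbf M(x)|^{1/2}&\mathbf 0\\ \mathbf 0&\mathbf 0\end{bmatrix}$. The Birman–Schwinger operator is $\mathcal K(\lambda)=\mathbf R_r\mathcal G_A(\lambda)\mathbf R_\ell$, where $\mathcal G_A(\lambda)=(-\partial_x+\mathbf A_\infty(\lambda))^{-1}$ on $L^2(\mathbb R,\mathbb C^4)$, the integral operator with kernel $\mathbf G_A(x-y)$, $\mathbf G_A(x)=-e^{\mathbf A_\infty x}\mathbf Q$ ($x\ge0$), $e^{\mathbf A_\infty x}(\mathbf I-\mathbf Q)$ ($x<0$). *)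

theory Defs
  imports "HOL-Analysis.Analysis"
begin

type_synonym cmat2 = "complex^2^2"
type_synonym cvec4 = "complex^(2+2)"
type_synonym cmat4 = "complex^(2+2)^(2+2)"

definition mat2 :: "complex \<Rightarrow> complex \<Rightarrow> complex \<Rightarrow> complex \<Rightarrow> cmat2" where
  "mat2 a b c d = vector [vector [a, b], vector [c, d]]"

definition block4 :: "cmat2 \<Rightarrow> cmat2 \<Rightarrow> cmat2 \<Rightarrow> cmat2 \<Rightarrow> cmat4" where
  "block4 A B C D = (\<chi> i j. case i of
      Inl p \<Rightarrow> (case j of Inl q \<Rightarrow> A $ p $ q | Inr q \<Rightarrow> B $ p $ q)
    | Inr p \<Rightarrow> (case j of Inl q \<Rightarrow> C $ p $ q | Inr q \<Rightarrow> D $ p $ q))"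

definition mat_adj :: "complex^'n^'n \<Rightarrow> complex^'n^'n" where
  "mat_adj A = (\<chi> i j. cnj (A $ j $ i))"

definition psd :: "complex^'n^'n \<Rightarrow> bool" where
  "psd A \<longleftrightarrow> mat_adj A = A \<and>
     (\<forall>x. Im (\<Sum>i\<in>UNIV. cnj (x $ i) * (A *v x) $ i) = 0 \<and>
          Re (\<Sum>i\<in>UNIV. cnj (x $ i) * (A *v x) $ i) \<ge> 0)"

definition psd_sqrt :: "complex^'n^'n \<Rightarrow> complex^'n^'n" where
  "psd_sqrt A = (THE S. psd S \<and> S ** S = A)"

definition mabs :: "complex^'n^'n \<Rightarrow> complex^'n^'n" where
  "mabs M = psd_sqrt (mat_adj M ** M)"

definition matpow :: "complex^'n^'n \<Rightarrow> nat \<Rightarrow> complex^'n^'n" where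
  "matpow A k = (((**) A) ^^ k) (mat 1)"

definition mexp :: "complex^'n^'n \<Rightarrow> complex^'n^'n" where
  "mexp A = (\<chi> i j. (\<Sum>k. (matpow A k) $ i $ j / of_nat (fact k)))"

definition gen_eigenspace :: "complex^'n^'n \<Rightarrow> complex \<Rightarrow> (complex^'n) set" where
  "gen_eigenspace A mu = {v. \<exists>k. matpow (A - mat mu) k *v v = 0}"

definition stable_proj :: "complex^'n^'n \<Rightarrow> complex^'n^'n" where
  "stable_proj A = (THE P. P ** P = P \<and>
      (\<forall>mu v. Re mu < 0 \<longrightarrow> v \<in> gen_eigenspace A mu \<longrightarrow> P *v v = v) \<and>
      (\<forall>mu v. Re mu > 0 \<longrightarrow> v \<in> gen_eigenspace A mu \<longrightarrow> P *v v = 0))"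

definition Bm :: "real \<Rightarrow> real \<Rightarrow> cmat2" where
  "Bm D \<beta> = mat2 \<beta> (- D/2) (D/2) \<beta>"

definition N0 :: "real \<Rightarrow> real \<Rightarrow> cmat2" where
  "N0 \<delta> \<alpha> = mat2 \<delta> (- \<alpha>) \<alpha> \<delta>"

definition N1 :: "real \<Rightarrow> real \<Rightarrow> cmat2" where
  "N1 \<epsilon> \<gamma> = mat2 \<epsilon> (- \<gamma>) \<gamma> \<epsilon>"

definition N2 :: "real \<Rightarrow> real \<Rightarrow> cmat2" where
  "N2 \<mu> \<nu> = mat2 \<mu> (- \<nu>) \<nu> \<mu>"

definition sigma_ess :: "real \<Rightarrow> real \<Rightarrow> real \<Rightarrow> real \<Rightarrow> complex set" where
  "sigma_ess D \<beta> \<delta> \<alpha> =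
     {(\<delta> + \<i>*\<alpha>) - (s^2) * (\<beta> + \<i>*(D/2)) | s::real. True} \<union>
     {(\<delta> - \<i>*\<alpha>) - (s^2) * (\<beta> - \<i>*(D/2)) | s::real. True}"

definition Mpot :: "real \<Rightarrow> real \<Rightarrow> real \<Rightarrow> real \<Rightarrow> (real \<Rightarrow> complex) \<Rightarrow> real \<Rightarrow> cmat2" where
  "Mpot \<epsilon> \<gamma> \<mu> \<nu> \<psi> x =
     (let r = cmod (\<psi> x); u = Re (\<psi> x); w = Im (\<psi> x);
          P = mat2 (u*u) (u*w) (w*u) (w*w)
      in mat2 (r^2) 0 0 (r^2) ** N1 \<epsilon> \<gamma> + mat2 (r^4) 0 0 (r^4) ** N2 \<mu> \<nu>
         + (mat2 2 0 0 2 ** N1 \<epsilon> \<gamma> + mat2 (4*r^2) 0 0 (4*r^2) ** N2 \<mu> \<nu>) ** P)"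

definition A_inf :: "real \<Rightarrow> real \<Rightarrow> real \<Rightarrow> real \<Rightarrow> complex \<Rightarrow> cmat4" where
  "A_inf D \<beta> \<delta> \<alpha> lam =
     block4 0 (mat 1) (matrix_inv (Bm D \<beta>) ** (mat lam - N0 \<delta> \<alpha>)) 0"

definition Qproj :: "real \<Rightarrow> real \<Rightarrow> real \<Rightarrow> real \<Rightarrow> complex \<Rightarrow> cmat4" where
  "Qproj D \<beta> \<delta> \<alpha> lam = stable_proj (A_inf D \<beta> \<delta> \<alpha> lam)"

text \<open>R_l and R_r built from the polar decomposition M = V |M|.\<close>
definition R_l :: "real \<Rightarrow> real \<Rightarrow> real \<Rightarrow> real \<Rightarrow> real \<Rightarrow> real \<Rightarrow> (real \<Rightarrow> complex)
     \<Rightarrow> (real \<Rightarrow> cmat2) \<Rightarrow> real \<Rightarrow> cmat4" where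
  "R_l D \<beta> \<epsilon> \<gamma> \<mu> \<nu> \<psi> V x =
     block4 0 0 (- (matrix_inv (Bm D \<beta>) ** V x ** psd_sqrt (mabs (Mpot \<epsilon> \<gamma> \<mu> \<nu> \<psi> x)))) 0"

definition R_r :: "real \<Rightarrow> real \<Rightarrow> real \<Rightarrow> real \<Rightarrow> (real \<Rightarrow> complex) \<Rightarrow> real \<Rightarrow> cmat4" where
  "R_r \<epsilon> \<gamma> \<mu> \<nu> \<psi> x = block4 (psd_sqrt (mabs (Mpot \<epsilon> \<gamma> \<mu> \<nu> \<psi> x))) 0 0 0"

text \<open>Kernel of G_A(lambda) = (-d/dx + A_inf(lambda))^{-1}.\<close>
definition G_A :: "real \<Rightarrow> real \<Rightarrow> real \<Rightarrow> real \<Rightarrow> complex \<Rightarrow> real \<Rightarrow> cmat4" where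
  "G_A D \<beta> \<delta> \<alpha> lam x =
     (if x \<ge> 0 then - (mexp (x *\<^sub>R A_inf D \<beta> \<delta> \<alpha> lam) ** Qproj D \<beta> \<delta> \<alpha> lam)
      else mexp (x *\<^sub>R A_inf D \<beta> \<delta> \<alpha> lam) ** (mat 1 - Qproj D \<beta> \<delta> \<alpha> lam))"

definition BS_kernel :: "real \<Rightarrow> real \<Rightarrow> real \<Rightarrow> real \<Rightarrow> real \<Rightarrow> real \<Rightarrow> real \<Rightarrow> real
     \<Rightarrow> (real \<Rightarrow> complex) \<Rightarrow> (real \<Rightarrow> cmat2) \<Rightarrow> complex \<Rightarrow> real \<Rightarrow> real \<Rightarrow> cmat4" where
  "BS_kernel D \<beta> \<delta> \<alpha> \<epsilon> \<gamma> \<mu> \<nu> \<psi> V lam x y =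
     R_r \<epsilon> \<gamma> \<mu> \<nu> \<psi> x ** G_A D \<beta> \<delta> \<alpha> lam (x - y) ** R_l D \<beta> \<epsilon> \<gamma> \<mu> \<nu> \<psi> V y"

definition BS_op :: "real \<Rightarrow> real \<Rightarrow> real \<Rightarrow> real \<Rightarrow> real \<Rightarrow> real \<Rightarrow> real \<Rightarrow> real
     \<Rightarrow> (real \<Rightarrow> complex) \<Rightarrow> (real \<Rightarrow> cmat2) \<Rightarrow> complex \<Rightarrow> (real \<Rightarrow> cvec4) \<Rightarrow> real \<Rightarrow> cvec4" where
  "BS_op D \<beta> \<delta> \<alpha> \<epsilon> \<gamma> \<mu> \<nu> \<psi> V lam f x =
     (\<integral>y. BS_kernel D \<beta> \<delta> \<alpha> \<epsilon> \<gamma> \<mu> \<nu> \<psi> V lam x y *v f y \<partial>lborel)"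

text \<open>An integral operator on L^2(R, C^4) with kernel k is Hilbert-Schmidt iff k is in
  L^2(R x R) (Frobenius norm; the norm on complex^n^m is the Frobenius norm).\<close>
definition HS_kernel :: "(real \<Rightarrow> real \<Rightarrow> cmat4) \<Rightarrow> bool" where
  "HS_kernel k \<longleftrightarrow> (\<lambda>(x, y). k x y) \<in> borel_measurable (lborel \<Otimes>\<^sub>M lborel) \<and>
     integrable (lborel \<Otimes>\<^sub>M lborel) (\<lambda>(x, y). (norm (k x y))^2)"

definition HS_integral_operator ::
    "((real \<Rightarrow> cvec4) \<Rightarrow> real \<Rightarrow> cvec4) \<Rightarrow> (real \<Rightarrow> real \<Rightarrow> cmat4) \<Rightarrow> bool" where
  "HS_integral_operator T k \<longleftrightarrow> HS_kernel k \<and>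
     (\<forall>f. f \<in> borel_measurable lborel \<longrightarrow> integrable lborel (\<lambda>y. (norm (f y))^2) \<longrightarrow>
        (AE x in lborel. T f x = (\<integral>y. k x y *v f y \<partial>lborel)))"

end

theory Submission
  imports Defs
begin

lemma forall_2': "(\<forall>i::2. P i) \<longleftrightarrow> P 1 \<and> P 2"
  by (metis exhaust_2)

lemma sum_2: "(\<Sum>i\<in>(UNIV::2 set). f i) = f 1 + f 2"
  by (simp add: UNIV_2)

lemma mat2_nth[simp]:
  "mat2 a b c d $ 1 $ 1 = a" "mat2 a b c d $ 1 $ 2 = b"
  "mat2 a b c d $ 2 $ 1 = c" "mat2 a b c d $ 2 $ 2 = d"
  by (simp_all add: mat2_def)

lemma mat2_eta: "A = mat2 (A$1$1) (A$1$2) (A$2$1) (A$2$2)"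
  by (simp add: vec_eq_iff forall_2')

lemma mat2_eq_iff: "mat2 a b c d = mat2 a' b' c' d' \<longleftrightarrow> a = a' \<and> b = b' \<and> c = c' \<and> d = d'"
  by (auto simp add: vec_eq_iff forall_2' simp del: mat2_nth) (metis mat2_nth)+

lemma mat2_mult: "mat2 a b c d ** mat2 a' b' c' d' = mat2 (a*a'+b*c') (a*b'+b*d') (c*a'+d*c') (c*b'+d*d')"
  by (simp add: vec_eq_iff forall_2' matrix_matrix_mult_def sum_2)

lemma mat2_add: "mat2 a b c d + mat2 a' b' c' d' = mat2 (a+a') (b+b') (c+c') (d+d')"
  by (simp add: vec_eq_iff forall_2')

lemma mat2_diff: "mat2 a b c d - mat2 a' b' c' d' = mat2 (a-a') (b-b') (c-c') (d-d')"
  by (simp add: vec_eq_iff forall_2')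

lemma mat2_uminus: "- mat2 a b c d = mat2 (-a) (-b) (-c) (-d)"
  by (simp add: vec_eq_iff forall_2')

lemma mat2_scaleR: "r *\<^sub>R mat2 a b c d = mat2 (r*\<^sub>Ra) (r*\<^sub>Rb) (r*\<^sub>Rc) (r*\<^sub>Rd)"
  by (simp add: vec_eq_iff forall_2')

lemma mat2_mat: "(mat x :: complex^2^2) = mat2 x 0 0 x"
  by (simp add: vec_eq_iff forall_2' mat_def)

lemma mat2_zero: "(0 :: complex^2^2) = mat2 0 0 0 0"
  by (simp add: vec_eq_iff forall_2')

lemma mat2_one: "(mat 1 :: complex^2^2) = mat2 1 0 0 1"
  by (simp add: mat2_mat)

lemma mat2_adj: "mat_adj (mat2 a b c d) = mat2 (cnj a) (cnj c) (cnj b) (cnj d)"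
  by (simp add: vec_eq_iff forall_2' mat_adj_def)

lemma mat2_mv: "mat2 a b c d *v x = vector [a * x$1 + b * x$2, c * x$1 + d * x$2]"
  by (simp add: vec_eq_iff forall_2' matrix_vector_mult_def sum_2)

lemmas mat2_simps = mat2_mult mat2_add mat2_diff mat2_uminus mat2_mat mat2_zero mat2_adj mat2_eq_iff

lemma UNIV_sum22: "(UNIV :: (2+2) set) = Inl ` UNIV \<union> Inr ` UNIV"
  by (metis UNIV_Plus_UNIV Plus_def)

lemma sum_22: "(\<Sum>i\<in>(UNIV::(2+2) set). f i) = (\<Sum>i\<in>UNIV. f (Inl i)) + (\<Sum>i\<in>UNIV. f (Inr i))"
proof -
  have "(\<Sum>i\<in>(UNIV::(2+2) set). f i) = (\<Sum>i\<in>(UNIV <+> UNIV). f i)"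
    by (simp add: UNIV_Plus_UNIV)
  also have "\<dots> = (\<Sum>i\<in>UNIV. f (Inl i)) + (\<Sum>i\<in>UNIV. f (Inr i))"
    by (subst sum.Plus) (auto simp: o_def)
  finally show ?thesis .
qed

lemma forall_22: "(\<forall>i::2+2. P i) \<longleftrightarrow> (\<forall>i. P (Inl i)) \<and> (\<forall>i. P (Inr i))"
  by (metis sum.exhaust)

lemma block4_nth[simp]:
  "block4 A B C D $ Inl p $ Inl q = A $ p $ q"
  "block4 A B C D $ Inl p $ Inr q = B $ p $ q"
  "block4 A B C D $ Inr p $ Inl q = C $ p $ q"
  "block4 A B C D $ Inr p $ Inr q = D $ p $ q"
  by (simp_all add: block4_def)

lemma block4_eta: "M = block4 (\<chi> p q. M $ Inl p $ Inl q) (\<chi> p q. M $ Inl p $ Inr q)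
    (\<chi> p q. M $ Inr p $ Inl q) (\<chi> p q. M $ Inr p $ Inr q)"
  by (simp add: vec_eq_iff forall_22)

lemma block4_eq_iff: "block4 A B C D = block4 A' B' C' D' \<longleftrightarrow> A = A' \<and> B = B' \<and> C = C' \<and> D = D'"
  apply (rule iffI)
   apply (simp add: vec_eq_iff forall_22)
   apply (metis block4_nth)
  done

lemma block4_mult: "block4 A B C D ** block4 A' B' C' D' =
   block4 (A ** A' + B ** C') (A ** B' + B ** D') (C ** A' + D ** C') (C ** B' + D ** D')"
  by (simp add: vec_eq_iff forall_22 matrix_matrix_mult_def sum_22)

lemma block4_add: "block4 A B C D + block4 A' B' C' D' = block4 (A+A') (B+B') (C+C') (D+D')"
  by (simp add: vec_eq_iff forall_22)

lemma block4_diff: "block4 A B C D - block4 A' B' C' D' = block4 (A-A') (B-B') (C-C') (D-D')"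
  by (simp add: vec_eq_iff forall_22)

lemma block4_uminus: "- block4 A B C D = block4 (-A) (-B) (-C) (-D)"
  by (simp add: vec_eq_iff forall_22)

lemma block4_scaleR: "r *\<^sub>R block4 A B C D = block4 (r*\<^sub>RA) (r*\<^sub>RB) (r*\<^sub>RC) (r*\<^sub>RD)"
  by (simp add: vec_eq_iff forall_22)

lemma block4_mat: "(mat x :: cmat4) = block4 (mat x) 0 0 (mat x)"
  by (simp add: vec_eq_iff forall_22 mat_def)

lemma block4_zero: "(0 :: cmat4) = block4 0 0 0 0"
  by (simp add: vec_eq_iff forall_22)

lemmas block4_simps = block4_mult block4_add block4_diff block4_uminus block4_eq_iff

definition dmat :: "('n::finite \<Rightarrow> complex) \<Rightarrow> complex^'n^'n" where
  "dmat d = (\<chi> i j. if i = j then d i else 0)"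

lemma dmat_nth: "dmat d $ i $ j = (if i = j then d i else 0)"
  by (simp add: dmat_def)

lemma dmat_mult: "dmat a ** dmat b = dmat (\<lambda>i. a i * b i)"
proof -
  have "(if i = k then a i else 0) * (if k = j then b k else 0) = (if k = i then (if i = j then a i * b i else 0) else 0)" for i j k :: 'a
    by auto
  then show ?thesis
    by (simp add: vec_eq_iff matrix_matrix_mult_def dmat_def)
qed

lemma dmat_add: "dmat a + dmat b = dmat (\<lambda>i. a i + b i)"
  by (simp add: vec_eq_iff dmat_def)

lemma dmat_diff: "dmat a - dmat b = dmat (\<lambda>i. a i - b i)"
  by (simp add: vec_eq_iff dmat_def)

lemma dmat_const: "dmat (\<lambda>_. c) = mat c"
  by (simp add: vec_eq_iff dmat_def mat_def)

lemma dmat_scaleR: "r *\<^sub>R dmat a = dmat (\<lambda>i. r *\<^sub>R a i)"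
  by (simp add: vec_eq_iff dmat_def)

lemma dmat_uminus: "- dmat a = dmat (\<lambda>i. - a i)"
  by (simp add: vec_eq_iff dmat_def)

lemma conj_entry: "(E ** dmat a ** Einv) $ i $ j = (\<Sum>l\<in>UNIV. E$i$l * a l * Einv$l$j)"
  by (simp add: matrix_matrix_mult_def dmat_def if_distrib if_distribR cong: if_cong)

locale diagz =
  fixes E Einv :: "complex^'n::finite^'n"
  assumes left: "Einv ** E = mat 1" and right: "E ** Einv = mat 1"
begin

lemma cmult: "(E ** dmat a ** Einv) ** (E ** dmat b ** Einv) = E ** dmat (\<lambda>i. a i * b i) ** Einv"
proof -
  have "(E ** dmat a ** Einv) ** (E ** dmat b ** Einv) = E ** dmat a ** (Einv ** E) ** dmat b ** Einv"
    by (simp add: matrix_mul_assoc)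
  also have "\<dots> = E ** dmat (\<lambda>i. a i * b i) ** Einv"
    by (simp add: left matrix_mul_assoc[symmetric] dmat_mult)
  finally show ?thesis .
qed

lemma cadd: "E ** dmat a ** Einv + E ** dmat b ** Einv = E ** dmat (\<lambda>i. a i + b i) ** Einv"
  by (simp add: vec_eq_iff conj_entry algebra_simps sum.distrib)

lemma cdiff: "E ** dmat a ** Einv - E ** dmat b ** Einv = E ** dmat (\<lambda>i. a i - b i) ** Einv"
  by (simp add: vec_eq_iff conj_entry algebra_simps sum_subtractf)

lemma cuminus: "- (E ** dmat a ** Einv) = E ** dmat (\<lambda>i. - a i) ** Einv"
  by (simp add: vec_eq_iff conj_entry sum_negf)

lemma cscaleR: "r *\<^sub>R (E ** dmat a ** Einv) = E ** dmat (\<lambda>i. r *\<^sub>R a i) ** Einv"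
  by (simp add: vec_eq_iff conj_entry scaleR_sum_right)

lemma mat_mult_mat: "(A::complex^'n^'m) ** mat c = (\<chi> i j. A$i$j * c)"
  by (simp add: vec_eq_iff matrix_matrix_mult_def mat_def if_distrib if_distribR cong: if_cong)

lemma cmat: "mat c = E ** dmat (\<lambda>_. c) ** Einv"
proof -
  have "(E ** dmat (\<lambda>_. c) ** Einv) $ i $ j = mat c $ i $ j" for i j
  proof -
    have "(E ** dmat (\<lambda>_. c) ** Einv) $ i $ j = (\<Sum>l\<in>UNIV. E$i$l * c * Einv$l$j)"
      by (rule conj_entry)
    also have "\<dots> = c * (\<Sum>l\<in>UNIV. E$i$l * Einv$l$j)"
      by (simp add: sum_distrib_left mult_ac)
    also have "\<dots> = c * (E ** Einv) $ i $ j"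
      by (simp add: matrix_matrix_mult_def)
    finally show ?thesis using right by (simp add: mat_def)
  qed
  then show ?thesis by (simp add: vec_eq_iff)
qed

lemma cpow: "matpow (E ** dmat a ** Einv) k = E ** dmat (\<lambda>i. a i ^ k) ** Einv"
proof (induction k)
  case 0
  show ?case using cmat[of 1] by (simp add: matpow_def)
next
  case (Suc k)
  have "matpow (E ** dmat a ** Einv) (Suc k) = (E ** dmat a ** Einv) ** matpow (E ** dmat a ** Einv) k"
    by (simp add: matpow_def)
  also have "\<dots> = E ** dmat (\<lambda>i. a i ^ Suc k) ** Einv"
    by (simp add: Suc cmult)
  finally show ?case .
qed

lemma cexp: "mexp (E ** dmat a ** Einv) = E ** dmat (\<lambda>i. exp (a i)) ** Einv"
proof -
  have "(\<Sum>k. matpow (E ** dmat a ** Einv) k $ i $ j / of_nat (fact k)) = (E ** dmat (\<lambda>i. exp (a i)) ** Einv) $ i $ j" for i j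
  proof -
    have "(\<lambda>k. \<Sum>l\<in>UNIV. E$i$l * Einv$l$j * (a l ^ k /\<^sub>R fact k)) sums (\<Sum>l\<in>UNIV. E$i$l * Einv$l$j * exp (a l))"
      by (intro sums_sum sums_mult exp_converges)
    moreover have "(\<Sum>l\<in>UNIV. E$i$l * Einv$l$j * (a l ^ k /\<^sub>R fact k)) = matpow (E ** dmat a ** Einv) k $ i $ j / of_nat (fact k)" for k
      by (simp add: cpow conj_entry sum_divide_distrib scaleR_conv_of_real divide_inverse mult_ac sum_distrib_left)
    moreover have "(\<Sum>l\<in>UNIV. E$i$l * Einv$l$j * exp (a l)) = (E ** dmat (\<lambda>i. exp (a i)) ** Einv) $ i $ j"
      by (simp add: conj_entry mult_ac)
    ultimately show ?thesis by (simp add: sums_iff)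
  qed
  then show ?thesis by (simp add: mexp_def vec_eq_iff)
qed

lemma vec_eqI: "(\<And>i. x $ i = y $ i) \<Longrightarrow> x = y"
  by (simp add: vec_eq_iff)

lemma mv_axis: "((M::complex^'n^'m) *v axis j 1) $ i = M $ i $ j"
  by (simp add: matrix_vector_mult_def axis_def if_distrib if_distribR cong: if_cong)

lemma dmat_mv: "(dmat d *v c) $ j = d j * c $ j"
  by (simp add: matrix_vector_mult_def dmat_def if_distrib if_distribR cong: if_cong)

lemma gen_eig_coord:
  assumes "v \<in> gen_eigenspace (E ** dmat mu ** Einv) m"
  shows "\<exists>k. \<forall>j. (mu j - m) ^ k * (Einv *v v) $ j = 0"
proof -
  from assms obtain k where k: "matpow (E ** dmat mu ** Einv - mat m) k *v v = 0"
    unfolding gen_eigenspace_def by blast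
  have "E ** dmat mu ** Einv - mat m = E ** dmat (\<lambda>i. mu i - m) ** Einv"
    by (subst cmat[of m]) (rule cdiff)
  with k have "(E ** dmat (\<lambda>i. (mu i - m) ^ k) ** Einv) *v v = 0"
    by (simp add: cpow)
  then have "Einv *v ((E ** dmat (\<lambda>i. (mu i - m) ^ k) ** Einv) *v v) = 0"
    by simp
  then have "dmat (\<lambda>i. (mu i - m) ^ k) *v (Einv *v v) = 0"
    by (simp add: matrix_vector_mul_assoc matrix_mul_assoc left)
  then show ?thesis
    by (auto simp: vec_eq_iff dmat_mv)
qed

lemma cstable:
  assumes nz: "\<And>j. Re (mu j) \<noteq> 0"
  shows "stable_proj (E ** dmat mu ** Einv) = E ** dmat (\<lambda>j. if Re (mu j) < 0 then 1 else 0) ** Einv"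
proof -
  define s where "s = (\<lambda>j. if Re (mu j) < 0 then 1 else (0::complex))"
  define X where "X = E ** dmat mu ** Einv"
  define P0 where "P0 = E ** dmat s ** Einv"
  let ?C = "\<lambda>P. P ** P = P \<and>
      (\<forall>m v. Re m < 0 \<longrightarrow> v \<in> gen_eigenspace X m \<longrightarrow> P *v v = v) \<and>
      (\<forall>m v. Re m > 0 \<longrightarrow> v \<in> gen_eigenspace X m \<longrightarrow> P *v v = 0)"
  have P0v: "P0 *v v = E *v (dmat s *v (Einv *v v))" for v
    by (simp add: P0_def matrix_vector_mul_assoc matrix_mul_assoc)
  have EEv: "E *v (Einv *v v) = v" for v
    by (simp add: matrix_vector_mul_assoc right)
  have "?C P0"
  proof (intro conjI allI impI)
    have "(\<lambda>i. s i * s i) = s" by (auto simp: s_def)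
    then show "P0 ** P0 = P0" unfolding P0_def cmult by simp
  next
    fix m v assume m: "Re m < 0" and v: "v \<in> gen_eigenspace X m"
    from gen_eig_coord[OF v[unfolded X_def]] obtain k where k: "\<forall>j. (mu j - m) ^ k * (Einv *v v) $ j = 0" by blast
    have "dmat s *v (Einv *v v) = Einv *v v"
    proof (rule vec_eqI)
      fix j
      show "(dmat s *v (Einv *v v)) $ j = (Einv *v v) $ j"
      proof (cases "Re (mu j) < 0")
        case False
        then have "mu j \<noteq> m" using m by auto
        then have "(Einv *v v) $ j = 0" using k by auto
        then show ?thesis by (simp add: dmat_mv)
      qed (simp add: dmat_mv s_def)
    qed
    then show "P0 *v v = v" by (simp add: P0v EEv)
  next
    fix m v assume m: "Re m > 0" and v: "v \<in> gen_eigenspace X m"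
    from gen_eig_coord[OF v[unfolded X_def]] obtain k where k: "\<forall>j. (mu j - m) ^ k * (Einv *v v) $ j = 0" by blast
    have "dmat s *v (Einv *v v) = 0"
    proof (rule vec_eqI)
      fix j
      show "(dmat s *v (Einv *v v)) $ j = 0 $ j"
      proof (cases "Re (mu j) < 0")
        case True
        then have "mu j \<noteq> m" using m by auto
        then have "(Einv *v v) $ j = 0" using k by auto
        then show ?thesis by (simp add: dmat_mv)
      qed (simp add: dmat_mv s_def)
    qed
    then show "P0 *v v = 0" by (simp add: P0v)
  qed
  have key: "P ** E = E ** dmat s" if "?C P" for P
  proof -
    have "(P ** E) $ i $ j = (E ** dmat s) $ i $ j" for i j
    proof -
      let ?u = "E *v axis j 1"
      have Xu: "X *v ?u = mu j *s ?u"
      proof -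
        have "X *v ?u = E *v (dmat mu *v (Einv *v ?u))"
          by (simp add: X_def matrix_vector_mul_assoc matrix_mul_assoc)
        also have "\<dots> = E *v (dmat mu *v axis j 1)"
          by (simp add: matrix_vector_mul_assoc left)
        also have "dmat mu *v axis j 1 = mu j *s axis j 1"
          by (simp add: vec_eq_iff dmat_mv axis_def)
        finally show ?thesis
          by (simp add: vec_eq_iff matrix_vector_mult_def sum_distrib_left mult_ac)
      qed
      have ug: "?u \<in> gen_eigenspace X (mu j)"
        unfolding gen_eigenspace_def
      proof (intro CollectI exI[of _ 1])
        show "matpow (X - mat (mu j)) 1 *v ?u = 0"
        proof -
          have m1: "matpow (X - mat (mu j)) 1 = X - mat (mu j)" by (simp add: matpow_def)
          have "mat (mu j) *v ?u = mu j *s ?u"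
            by (simp add: vec_eq_iff matrix_vector_mult_def mat_def if_distrib if_distribR cong: if_cong)
          then show ?thesis using Xu unfolding m1 by (simp add: matrix_vector_mult_diff_rdistrib)
        qed
      qed
      have Pu: "P *v ?u = s j *s ?u"
      proof (cases "Re (mu j) < 0")
        case True then show ?thesis using that ug by (simp add: s_def)
      next
        case False
        then have "Re (mu j) > 0" using nz[of j] by linarith
        then show ?thesis using that ug False by (simp add: s_def)
      qed
      have "(P ** E) $ i $ j = (P *v ?u) $ i"
        by (simp add: matrix_vector_mul_assoc mv_axis)
      also have "\<dots> = s j * E $ i $ j" by (simp add: Pu mv_axis)
      also have "\<dots> = (E ** dmat s) $ i $ j"
        by (simp add: matrix_matrix_mult_def dmat_def if_distrib if_distribR cong: if_cong)
      finally show ?thesis .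
    qed
    then show ?thesis by (simp add: vec_eq_iff)
  qed
  have "stable_proj X = P0"
    unfolding stable_proj_def
  proof (rule the_equality)
    show "?C P0" by fact
  next
    fix P assume "?C P"
    then have "P ** E = P0 ** E" using key \<open>?C P0\<close> by simp
    then have "P ** E ** Einv = P0 ** E ** Einv" by simp
    then show "P = P0" by (simp add: matrix_mul_assoc[symmetric] right)
  qed
  then show ?thesis by (simp add: X_def P0_def s_def)
qed

end

definition "Vm = mat2 1 1 (-\<i>) \<i>"
definition "Vi = mat2 (1/2) (\<i>/2) (1/2) (-\<i>/2)"

lemma Vm_Vi: "Vm ** Vi = mat 1" "Vi ** Vm = mat 1"
  by (simp_all add: Vm_def Vi_def mat2_simps field_simps)

lemma rot_diag: "mat2 a (-b) b a = Vm ** mat2 (a + \<i>*b) 0 0 (a - \<i>*b) ** Vi"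
  by (simp add: Vm_def Vi_def mat2_simps field_simps)

lemma matrix_inv_eq:
  fixes A X :: "complex^'n^'n"
  assumes "A ** X = mat 1" "X ** A = mat 1"
  shows "matrix_inv A = X"
proof -
  have "\<exists>A'. A ** A' = mat 1 \<and> A' ** A = mat 1" using assms by blast
  then have *: "A ** matrix_inv A = mat 1 \<and> matrix_inv A ** A = mat 1"
    unfolding matrix_inv_def by (rule someI_ex)
  have "matrix_inv A = matrix_inv A ** (A ** X)" by (simp add: assms)
  also have "\<dots> = X" using * by (simp add: matrix_mul_assoc)
  finally show ?thesis .
qed

definition "Mu m1 m2 = mat2 m1 0 0 m2"
definition "Vh = mat2 (1/4) (\<i>/4) (1/4) (-\<i>/4)"
definition "E4 m1 m2 = block4 Vm Vm (Vm ** Mu m1 m2) (-(Vm ** Mu m1 m2))"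
definition "EI4 m1 m2 = block4 Vh (Mu (1/m1) (1/m2) ** Vh) Vh (-(Mu (1/m1) (1/m2) ** Vh))"
definition "mu4 m1 m2 = (\<lambda>i::2+2. case i of Inl p \<Rightarrow> (if p = 1 then m1 else m2) | Inr p \<Rightarrow> (if p = 1 then -m1 else -m2))"

lemma dmat22: "(dmat d :: cmat4) = block4 (mat2 (d (Inl 1)) 0 0 (d (Inl 2))) 0 0 (mat2 (d (Inr 1)) 0 0 (d (Inr 2)))"
  by (simp add: vec_eq_iff forall_22 forall_2' dmat_def)

lemma E4_inv:
  assumes "m1 \<noteq> 0" "m2 \<noteq> 0"
  shows "EI4 m1 m2 ** E4 m1 m2 = mat 1" "E4 m1 m2 ** EI4 m1 m2 = mat 1"
  using assms
  by (simp_all add: E4_def EI4_def Vm_def Vh_def Mu_def block4_simps block4_mat mat2_simps field_simps)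

lemma Bm_diag: "Bm D \<beta> = Vm ** mat2 (\<beta> + \<i>*(D/2)) 0 0 (\<beta> - \<i>*(D/2)) ** Vi"
  unfolding Bm_def using rot_diag[of "of_real \<beta>" "of_real (D/2)"] by simp

lemma N0_diag: "N0 \<delta> \<alpha> = Vm ** mat2 (\<delta> + \<i>*\<alpha>) 0 0 (\<delta> - \<i>*\<alpha>) ** Vi"
  unfolding N0_def using rot_diag[of "of_real \<delta>" "of_real \<alpha>"] by simp

lemma diag_conj_inv:
  assumes "b1 \<noteq> 0" "b2 \<noteq> 0"
  shows "matrix_inv (Vm ** mat2 b1 0 0 b2 ** Vi) = Vm ** mat2 (1/b1) 0 0 (1/b2) ** Vi"
  using assms by (intro matrix_inv_eq) (simp_all add: Vm_def Vi_def mat2_simps field_simps)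

lemma W_diag:
  assumes "b1 \<noteq> 0" "b2 \<noteq> 0"
  shows "matrix_inv (Vm ** mat2 b1 0 0 b2 ** Vi) ** (mat lam - Vm ** mat2 n1 0 0 n2 ** Vi)
     = Vm ** mat2 ((lam - n1)/b1) 0 0 ((lam - n2)/b2) ** Vi"
  using assms by (subst diag_conj_inv[OF assms]) (simp add: Vm_def Vi_def mat2_simps field_simps)

lemma A_diag:
  assumes "m1 \<noteq> 0" "m2 \<noteq> 0"
  shows "block4 0 (mat 1) (Vm ** mat2 (m1^2) 0 0 (m2^2) ** Vi) 0 = E4 m1 m2 ** dmat (mu4 m1 m2) ** EI4 m1 m2"
  using assms
  by (simp add: dmat22 mu4_def E4_def EI4_def Vm_def Vi_def Vh_def Mu_def block4_simps block4_mat mat2_simps field_simps power2_eq_square)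

lemma csqrt_Re_pos:
  assumes "\<And>s. w \<noteq> - ((complex_of_real s)^2)"
  shows "Re (csqrt w) > 0"
proof (rule ccontr)
  assume "\<not> Re (csqrt w) > 0"
  then have "Re (csqrt w) = 0" using Re_csqrt[of w] by linarith
  then have "csqrt w = \<i> * of_real (Im (csqrt w))" by (simp add: complex_eq_iff)
  then have "w = (\<i> * of_real (Im (csqrt w)))^2" by (metis power2_csqrt)
  then have "w = - ((complex_of_real (Im (csqrt w)))^2)" by (simp add: power_mult_distrib)
  with assms show False by blast
qed

lemma A_spec:
  assumes nondeg: "(D, \<beta>) \<noteq> (0, 0)" and lam_ness: "lam \<notin> sigma_ess D \<beta> \<delta> \<alpha>"
  shows "\<exists>m1 m2. Re m1 > 0 \<and> Re m2 > 0 \<and> A_inf D \<beta> \<delta> \<alpha> lam = E4 m1 m2 ** dmat (mu4 m1 m2) ** EI4 m1 m2"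
proof -
  define b1 where "b1 = complex_of_real \<beta> + \<i>*(D/2)"
  define b2 where "b2 = complex_of_real \<beta> - \<i>*(D/2)"
  define n1 where "n1 = complex_of_real \<delta> + \<i>*\<alpha>"
  define n2 where "n2 = complex_of_real \<delta> - \<i>*\<alpha>"
  have b1: "b1 \<noteq> 0" using nondeg by (auto simp: b1_def complex_eq_iff)
  have b2: "b2 \<noteq> 0" using nondeg by (auto simp: b2_def complex_eq_iff)
  define m1 where "m1 = csqrt ((lam - n1)/b1)"
  define m2 where "m2 = csqrt ((lam - n2)/b2)"
  have "Re m1 > 0" unfolding m1_def
  proof (rule csqrt_Re_pos)
    fix s :: real
    show "(lam - n1) / b1 \<noteq> - ((of_real s)^2)"
    proof
      assume "(lam - n1) / b1 = - ((of_real s)^2)"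
      then have "lam = (\<delta> + \<i>*\<alpha>) - (of_real (s^2)) * (\<beta> + \<i>*(of_real D/2))"
        using b1 by (simp add: field_simps n1_def b1_def)
      then have "lam \<in> sigma_ess D \<beta> \<delta> \<alpha>" unfolding sigma_ess_def by blast
      with lam_ness show False by blast
    qed
  qed
  moreover have "Re m2 > 0" unfolding m2_def
  proof (rule csqrt_Re_pos)
    fix s :: real
    show "(lam - n2) / b2 \<noteq> - ((of_real s)^2)"
    proof
      assume "(lam - n2) / b2 = - ((of_real s)^2)"
      then have "lam = (\<delta> - \<i>*\<alpha>) - (of_real (s^2)) * (\<beta> - \<i>*(of_real D/2))"
        using b2 by (simp add: field_simps n2_def b2_def)
      then have "lam \<in> sigma_ess D \<beta> \<delta> \<alpha>" unfolding sigma_ess_def by blast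
      with lam_ness show False by blast
    qed
  qed
  moreover have "A_inf D \<beta> \<delta> \<alpha> lam = E4 m1 m2 ** dmat (mu4 m1 m2) ** EI4 m1 m2"
  proof -
    have "A_inf D \<beta> \<delta> \<alpha> lam = block4 0 (mat 1) (Vm ** mat2 ((lam - n1)/b1) 0 0 ((lam - n2)/b2) ** Vi) 0"
      unfolding A_inf_def Bm_diag N0_diag
      using W_diag[OF b1 b2, of lam n1 n2] by (simp add: b1_def b2_def n1_def n2_def)
    also have "\<dots> = block4 0 (mat 1) (Vm ** mat2 (m1^2) 0 0 (m2^2) ** Vi) 0"
      by (simp add: m1_def m2_def)
    also have "\<dots> = E4 m1 m2 ** dmat (mu4 m1 m2) ** EI4 m1 m2"
      using \<open>Re m1 > 0\<close> \<open>Re m2 > 0\<close> by (intro A_diag) auto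
    finally show ?thesis .
  qed
  ultimately show ?thesis by blast
qed

lemma norm_vec_sq: "(norm (x::'a::real_normed_vector^'n))^2 = (\<Sum>i\<in>UNIV. (norm (x$i))^2)"
  by (simp add: norm_vec_def L2_set_def sum_nonneg)

lemma norm_mat_sq: "(norm (M::complex^'n^'m))^2 = (\<Sum>i\<in>UNIV. \<Sum>j\<in>UNIV. (cmod (M$i$j))^2)"
  by (simp add: norm_vec_sq)

lemma entry_le_norm: "cmod ((M::complex^'n^'m)$i$j) \<le> norm M"
  by (rule order_trans[OF Finite_Cartesian_Product.norm_nth_le Finite_Cartesian_Product.norm_nth_le])

lemma norm_vec_le_sum: "norm (x::'a::real_normed_vector^'n) \<le> (\<Sum>i\<in>UNIV. norm (x$i))"
  unfolding norm_vec_def by (rule L2_set_le_sum) simp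

lemma norm_mat_le_sum: "norm (M::complex^'n^'m) \<le> (\<Sum>i\<in>UNIV. \<Sum>j\<in>UNIV. cmod (M$i$j))"
  by (rule order_trans[OF norm_vec_le_sum]) (intro sum_mono norm_vec_le_sum)

lemma norm_mm: "norm ((A::complex^'m^'n) ** (B::complex^'k^'m)) \<le> real (CARD('n)*CARD('k)*CARD('m)) * norm A * norm B"
proof -
  have e: "cmod ((A ** B)$i$j) \<le> real CARD('m) * (norm A * norm B)" for i j
  proof -
    have "cmod ((A ** B)$i$j) = cmod (\<Sum>l\<in>UNIV. A$i$l * B$l$j)" by (simp add: matrix_matrix_mult_def)
    also have "\<dots> \<le> (\<Sum>l\<in>UNIV. cmod (A$i$l) * cmod (B$l$j))"
      by (rule order_trans[OF norm_sum]) (simp add: norm_mult)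
    also have "\<dots> \<le> (\<Sum>l\<in>(UNIV::'m set). norm A * norm B)"
      by (intro sum_mono mult_mono entry_le_norm) auto
    finally show ?thesis by simp
  qed
  have "norm (A ** B) \<le> (\<Sum>i\<in>UNIV. \<Sum>j\<in>UNIV. cmod ((A ** B)$i$j))" by (rule norm_mat_le_sum)
  also have "\<dots> \<le> (\<Sum>i\<in>(UNIV::'n set). \<Sum>j\<in>(UNIV::'k set). real CARD('m) * (norm A * norm B))"
    by (intro sum_mono e)
  finally show ?thesis by (simp add: mult_ac)
qed

lemma norm_adj: "norm (mat_adj (M::complex^'n^'n)) = norm M"
proof -
  have "(norm (mat_adj M))^2 = (\<Sum>i\<in>UNIV. \<Sum>j\<in>UNIV. (cmod (M$j$i))^2)"
    unfolding norm_mat_sq mat_adj_def by (simp only: vec_lambda_beta complex_mod_cnj)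
  also have "\<dots> = (\<Sum>j\<in>UNIV. \<Sum>i\<in>UNIV. (cmod (M$j$i))^2)"
    by (rule sum.swap)
  also have "\<dots> = (norm M)^2" by (simp only: norm_mat_sq)
  finally have "(norm (mat_adj M))^2 = (norm M)^2" .
  then show ?thesis by (simp add: power2_eq_iff_nonneg)
qed

lemma herm_norm_sq:
  assumes "mat_adj (S::complex^'n^'n) = S"
  shows "(norm S)^2 \<le> real CARD('n) * norm (S ** S)"
proof -
  have sji: "S$j$i = cnj (S$i$j)" for i j
  proof -
    have "S$j$i = mat_adj S $ j $ i" using assms by simp
    also have "\<dots> = cnj (S$i$j)" by (simp add: mat_adj_def)
    finally show ?thesis .
  qed
  have d: "(S ** S)$i$i = of_real (\<Sum>j\<in>UNIV. (cmod (S$i$j))^2)" for i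
  proof -
    have "(S ** S)$i$i = (\<Sum>j\<in>UNIV. S$i$j * S$j$i)" by (simp add: matrix_matrix_mult_def)
    also have "\<dots> = (\<Sum>j\<in>UNIV. of_real ((cmod (S$i$j))^2))"
    proof (intro sum.cong refl)
      fix j show "S$i$j * S$j$i = of_real ((cmod (S$i$j))^2)"
        using sji[of j i] complex_norm_square[of "S$i$j"] by simp
    qed
    finally show ?thesis by simp
  qed
  have "(norm S)^2 = (\<Sum>i\<in>UNIV. Re ((S ** S)$i$i))"
    by (simp only: norm_mat_sq d Re_complex_of_real)
  also have "\<dots> \<le> (\<Sum>i\<in>(UNIV::'n set). norm (S ** S))"
    by (intro sum_mono) (meson abs_Re_le_cmod abs_le_D1 entry_le_norm order_trans)
  finally show ?thesis by simp
qed

lemma meas_vec_iff: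
  fixes f :: "'a \<Rightarrow> 'b::euclidean_space^'n"
  shows "f \<in> borel_measurable M \<longleftrightarrow> (\<forall>i. (\<lambda>x. f x $ i) \<in> borel_measurable M)"
proof
  assume f: "f \<in> borel_measurable M"
  show "\<forall>i. (\<lambda>x. f x $ i) \<in> borel_measurable M"
  proof
    fix i
    have "continuous_on UNIV (\<lambda>v::'b^'n. v $ i)"
      by (intro linear_continuous_on bounded_linear_vec_nth)
    then have "(\<lambda>v::'b^'n. v $ i) \<in> borel_measurable borel"
      by (rule borel_measurable_continuous_onI)
    from measurable_compose[OF f this] show "(\<lambda>x. f x $ i) \<in> borel_measurable M" .
  qed
next
  assume c: "\<forall>i. (\<lambda>x. f x $ i) \<in> borel_measurable M"
  show "f \<in> borel_measurable M"
  proof (subst borel_measurable_euclidean_space, intro ballI)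
    fix b :: "'b^'n" assume "b \<in> Basis"
    then obtain i u where b: "b = axis i u" and "u \<in> Basis" by (auto simp: Basis_vec_def)
    have "(\<lambda>x. f x $ i \<bullet> u) \<in> borel_measurable M"
      using c by (intro borel_measurable_inner) auto
    then show "(\<lambda>x. f x \<bullet> b) \<in> borel_measurable M" by (simp add: b inner_axis)
  qed
qed

lemma meas_mat:
  fixes f :: "'a \<Rightarrow> complex^'n^'m"
  shows "(\<And>i j. (\<lambda>x. f x $ i $ j) \<in> borel_measurable M) \<Longrightarrow> f \<in> borel_measurable M"
  by (simp add: meas_vec_iff)

lemma meas_entry:
  fixes f :: "'a \<Rightarrow> complex^'n^'m"
  shows "f \<in> borel_measurable M \<Longrightarrow> (\<lambda>x. f x $ i $ j) \<in> borel_measurable M"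
  by (simp add: meas_vec_iff)

lemma meas_mm:
  fixes f :: "'a \<Rightarrow> complex^'n^'m" and g :: "'a \<Rightarrow> complex^'k^'n"
  assumes "f \<in> borel_measurable M" "g \<in> borel_measurable M"
  shows "(\<lambda>x. f x ** g x) \<in> borel_measurable M"
proof (rule meas_mat)
  fix i j
  have [measurable]: "(\<lambda>x. f x $ i $ l) \<in> borel_measurable M" "(\<lambda>x. g x $ l $ j) \<in> borel_measurable M" for l
    using assms by (simp_all add: meas_entry)
  show "(\<lambda>x. (f x ** g x) $ i $ j) \<in> borel_measurable M"
    unfolding matrix_matrix_mult_def by simp
qed

lemma meas_mat2:
  assumes "f1 \<in> borel_measurable M" "f2 \<in> borel_measurable M" "f3 \<in> borel_measurable M" "f4 \<in> borel_measurable M"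
  shows "(\<lambda>x. mat2 (f1 x) (f2 x) (f3 x) (f4 x)) \<in> borel_measurable M"
proof (rule meas_mat)
  fix i j :: 2
  show "(\<lambda>x. mat2 (f1 x) (f2 x) (f3 x) (f4 x) $ i $ j) \<in> borel_measurable M"
    using assms exhaust_2[of i] exhaust_2[of j] by auto
qed

lemma meas_block4:
  fixes A B C D :: "'a \<Rightarrow> cmat2"
  assumes "A \<in> borel_measurable M" "B \<in> borel_measurable M" "C \<in> borel_measurable M" "D \<in> borel_measurable M"
  shows "(\<lambda>x. block4 (A x) (B x) (C x) (D x)) \<in> borel_measurable M"
proof (rule meas_mat)
  fix i j :: "2+2"
  show "(\<lambda>x. block4 (A x) (B x) (C x) (D x) $ i $ j) \<in> borel_measurable M"
    using assms by (cases i; cases j) (simp_all add: meas_entry)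
qed

definition psd2c :: "cmat2 \<Rightarrow> bool" where
  "psd2c A \<longleftrightarrow> Im (A$1$1) = 0 \<and> Im (A$2$2) = 0 \<and> A$2$1 = cnj (A$1$2) \<and> Re (A$1$1) \<ge> 0 \<and> Re (A$2$2) \<ge> 0
     \<and> (cmod (A$1$2))^2 \<le> Re (A$1$1) * Re (A$2$2)"

lemma qform2:
  "(\<Sum>i\<in>UNIV. cnj (x$i) * (mat2 (of_real p) z (cnj z) (of_real q) *v x)$i) =
     of_real (p * (cmod (x$1))^2 + q * (cmod (x$2))^2 + 2 * Re (cnj (x$1) * z * x$2))"
  unfolding cmod_power2 by (simp add: sum_2 mat2_mv complex_eq_iff algebra_simps power2_eq_square)

lemma psd2c_form:
  assumes "psd2c A"
  shows "A = mat2 (of_real (Re (A$1$1))) (A$1$2) (cnj (A$1$2)) (of_real (Re (A$2$2)))"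
  using assms unfolding psd2c_def
  by (subst mat2_eta) (simp add: mat2_eq_iff complex_eq_iff)

lemma real_amgm_aux:
  fixes p q u v k :: real
  assumes "p \<ge> 0" "q \<ge> 0" "u \<ge> 0" "v \<ge> 0" "k \<ge> 0" "k^2 \<le> p * q"
  shows "2 * k * u * v \<le> p * u^2 + q * v^2"
proof -
  have k: "k \<le> sqrt p * sqrt q" using assms by (simp add: real_le_rsqrt real_sqrt_mult[symmetric])
  have "0 \<le> (sqrt p * u - sqrt q * v)^2" by simp
  then have "2 * (sqrt p * sqrt q) * u * v \<le> p * u^2 + q * v^2"
    using assms by (simp add: power2_eq_square algebra_simps)
  moreover have "2 * k * u * v \<le> 2 * (sqrt p * sqrt q) * u * v"
    using k assms by (intro mult_right_mono) auto
  ultimately show ?thesis by linarith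
qed

lemma psd_iff_psd2c: "psd (A::cmat2) \<longleftrightarrow> psd2c A"
proof
  assume "psd A"
  then have adj: "mat_adj A = A" and form: "\<And>x::complex^2. Im (\<Sum>i\<in>UNIV. cnj (x $ i) * (A *v x) $ i) = 0 \<and>
          Re (\<Sum>i\<in>UNIV. cnj (x $ i) * (A *v x) $ i) \<ge> 0"
    unfolding psd_def by blast+
  have e: "A$i$j = cnj (A$j$i)" for i j
  proof -
    have "A$i$j = mat_adj A $ i $ j" using adj by simp
    then show ?thesis by (simp add: mat_adj_def)
  qed
  define p where "p = Re (A$1$1)"
  define q where "q = Re (A$2$2)"
  define z where "z = A$1$2"
  have i1: "Im (A$1$1) = 0" using e[of 1 1] by (metis Reals_cnj_iff complex_is_Real_iff)
  have i2: "Im (A$2$2) = 0" using e[of 2 2] by (metis Reals_cnj_iff complex_is_Real_iff)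
  have A: "A = mat2 (of_real p) z (cnj z) (of_real q)"
    by (subst mat2_eta) (simp add: mat2_eq_iff complex_eq_iff p_def q_def z_def i1 i2 e[of 2 1])
  have F: "0 \<le> p * (cmod (x$1))^2 + q * (cmod (x$2))^2 + 2 * Re (cnj (x$1) * z * x$2)" for x :: "complex^2"
    using form[of x] unfolding A qform2 by simp
  have p0: "p \<ge> 0" using F[of "vector [1, 0]"] by simp
  have q0: "q \<ge> 0" using F[of "vector [0, 1]"] by simp
  have cz: "cnj z * z = of_real ((cmod z)^2)" by (metis complex_norm_square mult.commute)
  have cm: "cmod z * cmod z = Re z * Re z + Im z * Im z" using cmod_power2[of z] by (simp add: power2_eq_square)
  have r1: "0 \<le> p * (p * q - (cmod z)^2)"
    using F[of "vector [- z, of_real p]"] by (simp add: cz cm power2_eq_square algebra_simps)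
  have r2: "0 \<le> q * (p * q - (cmod z)^2)"
    using F[of "vector [of_real q, - cnj z]"] by (simp add: cz cm power2_eq_square algebra_simps)
  have r3: "0 \<le> p + q * (cmod z)^2 - 2 * (cmod z)^2"
    using F[of "vector [1, - cnj z]"] by (simp add: cz cm power2_eq_square algebra_simps)
  have "(cmod z)^2 \<le> p * q"
  proof (cases "p > 0")
    case True then show ?thesis using r1 by (simp add: zero_le_mult_iff)
  next
    case False
    then have "p = 0" using p0 by simp
    show ?thesis
    proof (cases "q > 0")
      case True then show ?thesis using r2 by (simp add: zero_le_mult_iff)
    next
      case False
      then have "q = 0" using q0 by simp
      then show ?thesis using r3 \<open>p = 0\<close> by simp
    qed
  qed
  then show "psd2c A" unfolding psd2c_def using p0 q0 i1 i2 e[of 2 1]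
    by (simp add: p_def q_def z_def)
next
  assume P: "psd2c A"
  define p where "p = Re (A$1$1)"
  define q where "q = Re (A$2$2)"
  define z where "z = A$1$2"
  have A: "A = mat2 (of_real p) z (cnj z) (of_real q)"
    using psd2c_form[OF P] by (simp add: p_def q_def z_def)
  have pq: "p \<ge> 0" "q \<ge> 0" "(cmod z)^2 \<le> p * q" using P by (auto simp: psd2c_def p_def q_def z_def)
  show "psd A" unfolding psd_def
  proof (intro conjI allI)
    show "mat_adj A = A" unfolding A by (simp add: mat2_adj)
  next
    fix x
    show "Im (\<Sum>i\<in>UNIV. cnj (x $ i) * (A *v x) $ i) = 0" unfolding A qform2 by simp
    have "2 * cmod z * cmod (x$1) * cmod (x$2) \<le> p * (cmod (x$1))^2 + q * (cmod (x$2))^2"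
      using pq by (intro real_amgm_aux) auto
    moreover have "- Re (cnj (x$1) * z * x$2) \<le> cmod z * cmod (x$1) * cmod (x$2)"
    proof -
      have "cmod (cnj (x$1) * z * x$2) = cmod z * cmod (x$1) * cmod (x$2)" by (simp add: norm_mult)
      then show ?thesis using abs_Re_le_cmod[of "cnj (x$1) * z * x$2"] by linarith
    qed
    ultimately show "Re (\<Sum>i\<in>UNIV. cnj (x $ i) * (A *v x) $ i) \<ge> 0" unfolding A qform2 by simp
  qed
qed

definition sq2 :: "cmat2 \<Rightarrow> cmat2" where
  "sq2 A = (let a = Re (A$1$1); c = Re (A$2$2); z = A$1$2; d = sqrt (a*c - (cmod z)^2);
             t = sqrt (a + c + 2*d)
     in mat2 (of_real ((a+d)/t)) (z / of_real t) (cnj z / of_real t) (of_real ((c+d)/t)))"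

lemma sq2_mat2: "sq2 (mat2 (of_real a) z (cnj z) (of_real c)) =
   mat2 (of_real ((a + sqrt (a*c - (cmod z)^2)) / sqrt (a + c + 2* sqrt (a*c - (cmod z)^2))))
        (z / of_real (sqrt (a + c + 2* sqrt (a*c - (cmod z)^2))))
        (cnj z / of_real (sqrt (a + c + 2* sqrt (a*c - (cmod z)^2))))
        (of_real ((c + sqrt (a*c - (cmod z)^2)) / sqrt (a + c + 2* sqrt (a*c - (cmod z)^2))))"
  by (simp add: sq2_def Let_def)

lemma zcz: "z * cnj z = of_real ((cmod z)^2)"
  by (rule complex_norm_square[symmetric])

lemma sq2_exists:
  assumes P: "psd2c A"
  shows "psd2c (sq2 A) \<and> sq2 A ** sq2 A = A"
proof -
  define a where "a = Re (A$1$1)"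
  define c where "c = Re (A$2$2)"
  define z where "z = A$1$2"
  have A: "A = mat2 (of_real a) z (cnj z) (of_real c)"
    using psd2c_form[OF P] by (simp add: a_def c_def z_def)
  have ac: "a \<ge> 0" "c \<ge> 0" "(cmod z)^2 \<le> a * c" using P by (auto simp: psd2c_def a_def c_def z_def)
  define k where "k = (cmod z)^2"
  have k0: "k \<ge> 0" by (simp add: k_def)
  define d where "d = sqrt (a*c - k)"
  have d0: "d \<ge> 0" and d2: "d * d = a*c - k" using ac by (auto simp: d_def k_def)
  define t where "t = sqrt (a + c + 2*d)"
  have t0: "t \<ge> 0" and t2: "t * t = a + c + 2*d" using ac d0 by (auto simp: t_def)
  have S: "sq2 A = mat2 (of_real ((a+d)/t)) (z / of_real t) (cnj z / of_real t) (of_real ((c+d)/t))"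
    unfolding A sq2_mat2 by (simp add: d_def t_def k_def)
  show ?thesis
  proof (cases "t = 0")
    case True
    then have "a + c + 2*d = 0" using t2 by simp
    then have "a = 0" "c = 0" "d = 0" using ac d0 by auto
    then have "k = 0" using ac k0 by (simp add: k_def)
    then have "z = 0" by (simp add: k_def)
    have "sq2 A = mat2 0 0 0 0" unfolding S using True by simp
    moreover have "A = mat2 0 0 0 0" unfolding A using \<open>a = 0\<close> \<open>c = 0\<close> \<open>z = 0\<close> by simp
    ultimately show ?thesis by (simp add: mat2_mult psd2c_def)
  next
    case False
    then have tp: "t > 0" using t0 by simp
    have psd: "psd2c (sq2 A)"
    proof -
      have "0 \<le> a*d" "0 \<le> c*d" "0 \<le> d*d" using ac d0 by auto
      moreover have "(a + d) * (c + d) = a*c + a*d + c*d + d*d" by (simp add: algebra_simps)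
      ultimately have "k \<le> (a + d) * (c + d)" using ac mult_nonneg_nonneg[OF d0 d0] unfolding k_def by linarith
      then have "k / (t*t) \<le> (a + d) * (c + d) / (t*t)" using tp by (intro divide_right_mono) auto
      moreover have "(cmod (z / of_real t))^2 = k / (t*t)"
        using tp by (simp add: k_def norm_divide power2_eq_square)
      ultimately show ?thesis unfolding S psd2c_def using ac d0 tp by simp
    qed
    have sq: "sq2 A ** sq2 A = A"
    proof -
      have tc: "(of_real t :: complex) \<noteq> 0" using tp by simp
      have e1: "(a + d) * (a + d) + k = a * (t * t)" using d2 t2 by (simp add: algebra_simps)
      have e2: "(c + d) * (c + d) + k = c * (t * t)" using d2 t2 by (simp add: algebra_simps)
      have e3: "(a + d) + (c + d) = t * t" using t2 by simp
      have "of_real ((a+d)/t) * of_real ((a+d)/t) + z / of_real t * (cnj z / of_real t) = (of_real a :: complex)"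
      proof -
        have "z / of_real t * (cnj z / of_real t) = of_real (k / (t*t))" by (simp add: zcz k_def)
        moreover have "(a+d)/t * ((a+d)/t) + k/(t*t) = a" using e1 tp by (simp add: field_simps)
        ultimately show ?thesis by (metis of_real_add of_real_mult)
      qed
      moreover have "cnj z / of_real t * (z / of_real t) + of_real ((c+d)/t) * of_real ((c+d)/t) = (of_real c :: complex)"
      proof -
        have "cnj z / of_real t * (z / of_real t) = of_real (k / (t*t))" by (simp add: zcz[of z, simplified mult.commute] k_def mult.commute)
        moreover have "k/(t*t) + (c+d)/t * ((c+d)/t) = c" using e2 tp by (simp add: field_simps)
        ultimately show ?thesis by (metis of_real_add of_real_mult)
      qed
      moreover have "of_real ((a+d)/t) * (z / of_real t) + z / of_real t * of_real ((c+d)/t) = z"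
      proof -
        have "of_real ((a+d)/t) * (z / of_real t) + z / of_real t * of_real ((c+d)/t) = z * of_real (((a+d) + (c+d)) / (t*t))"
          using tc by (simp add: field_simps)
        also have "\<dots> = z" using e3 tp by simp
        finally show ?thesis .
      qed
      moreover have "cnj z / of_real t * of_real ((a+d)/t) + of_real ((c+d)/t) * (cnj z / of_real t) = cnj z"
      proof -
        have "cnj z / of_real t * of_real ((a+d)/t) + of_real ((c+d)/t) * (cnj z / of_real t) = cnj z * of_real (((a+d) + (c+d)) / (t*t))"
          using tc by (simp add: field_simps)
        also have "\<dots> = cnj z" using e3 tp by simp
        finally show ?thesis .
      qed
      ultimately have "sq2 A ** sq2 A = mat2 (of_real a) z (cnj z) (of_real c)"
        unfolding S mat2_mult mat2_eq_iff by simp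
      then show ?thesis using A by simp
    qed
    show ?thesis using psd sq by simp
  qed
qed

lemma sq2_unique:
  assumes P: "psd2c S" and SS: "S ** S = A"
  shows "S = sq2 A"
proof -
  define p where "p = Re (S$1$1)"
  define q where "q = Re (S$2$2)"
  define w where "w = S$1$2"
  have S: "S = mat2 (of_real p) w (cnj w) (of_real q)"
    using psd2c_form[OF P] by (simp add: p_def q_def w_def)
  have pq: "p \<ge> 0" "q \<ge> 0" "(cmod w)^2 \<le> p * q" using P by (auto simp: psd2c_def p_def q_def w_def)
  define k where "k = (cmod w)^2"
  have k0: "k \<ge> 0" by (simp add: k_def)
  have A: "A = mat2 (of_real (p*p + k)) (w * of_real (p + q)) (cnj (w * of_real (p + q))) (of_real (q*q + k))"
    unfolding SS[symmetric] S mat2_mult mat2_eq_iff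
    by (simp add: k_def zcz algebra_simps)
  have cz: "(cmod (w * of_real (p + q)))^2 = k * ((p+q)*(p+q))"
  proof -
    have "cmod (w * of_real (p + q)) = cmod w * (p + q)"
      using pq by (simp add: norm_mult del: of_real_add)
    then show ?thesis by (simp add: k_def power2_eq_square)
  qed
  have d: "sqrt ((p*p + k) * (q*q + k) - (cmod (w * of_real (p + q)))^2) = p*q - k"
  proof (rule real_sqrt_unique)
    show "(p*q - k)^2 = (p*p + k) * (q*q + k) - (cmod (w * of_real (p + q)))^2"
      unfolding cz by (simp add: power2_eq_square algebra_simps)
    show "0 \<le> p*q - k" using pq by (simp add: k_def)
  qed
  have t: "sqrt ((p*p + k) + (q*q + k) + 2 * (p*q - k)) = p + q"
    using pq by (intro real_sqrt_unique) (auto simp: power2_eq_square algebra_simps)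
  have sq: "sq2 A = mat2 (of_real ((p*p + k + (p*q - k)) / (p + q))) (w * of_real (p + q) / of_real (p + q))
        (cnj (w * of_real (p + q)) / of_real (p + q)) (of_real ((q*q + k + (p*q - k)) / (p + q)))"
    unfolding A sq2_mat2 d t by simp
  show ?thesis
  proof (cases "p + q = 0")
    case True
    then have "p = 0" "q = 0" using pq by auto
    then have "w = 0" using pq by simp
    show ?thesis unfolding sq S using \<open>p = 0\<close> \<open>q = 0\<close> \<open>w = 0\<close> by simp
  next
    case False
    then have "p + q > 0" using pq by simp
    have "(of_real (p + q) :: complex) \<noteq> 0" using False by (metis of_real_eq_0_iff)
    moreover have "(p*p + k + (p*q - k)) / (p + q) = p" using False by (simp add: field_simps power2_eq_square)
    moreover have "(q*q + k + (p*q - k)) / (p + q) = q" using False by (simp add: field_simps power2_eq_square)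
    ultimately show ?thesis unfolding sq S mat2_eq_iff by simp
  qed
qed

lemma psd_sqrt_eq:
  assumes "psd (A::cmat2)"
  shows "psd_sqrt A = sq2 A" "psd (sq2 A)" "sq2 A ** sq2 A = A"
proof -
  have P: "psd2c A" using assms psd_iff_psd2c by blast
  from sq2_exists[OF P] show ps: "psd (sq2 A)" and "sq2 A ** sq2 A = A"
    using psd_iff_psd2c by blast+
  show "psd_sqrt A = sq2 A"
    unfolding psd_sqrt_def
  proof (rule the_equality)
    show "psd (sq2 A) \<and> sq2 A ** sq2 A = A" using ps \<open>sq2 A ** sq2 A = A\<close> by blast
    fix S assume "psd S \<and> S ** S = A"
    then show "S = sq2 A" using sq2_unique psd_iff_psd2c by blast
  qed
qed

lemma mat_adj_mult: "mat_adj ((A::complex^'n^'n) ** (B::complex^'n^'n)) = mat_adj B ** mat_adj A"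
  by (simp add: vec_eq_iff mat_adj_def matrix_matrix_mult_def mult.commute)

lemma mat_adj_adj: "mat_adj (mat_adj A) = (A::complex^'n^'n)"
  by (simp add: vec_eq_iff mat_adj_def)

lemma psd_adjM: "psd (mat_adj (M::complex^'n^'n) ** M)"
  unfolding psd_def
proof (intro conjI allI)
  show "mat_adj (mat_adj M ** M) = mat_adj M ** M" by (simp add: mat_adj_mult mat_adj_adj)
next
  fix x :: "complex^'n"
  define y where "y = M *v x"
  have mv: "(mat_adj M ** M) *v x = mat_adj M *v y" by (simp add: y_def matrix_vector_mul_assoc)
  have mv2: "(mat_adj M *v y)$i = (\<Sum>k\<in>UNIV. cnj (M$k$i) * y$k)" for i
    by (simp add: matrix_vector_mult_def mat_adj_def)
  have "(\<Sum>i\<in>UNIV. cnj (x$i) * ((mat_adj M ** M) *v x)$i) = (\<Sum>i\<in>UNIV. \<Sum>k\<in>UNIV. cnj (x$i) * cnj (M$k$i) * y$k)"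
    unfolding mv mv2 by (simp add: sum_distrib_left mult_ac)
  also have "\<dots> = (\<Sum>k\<in>UNIV. \<Sum>i\<in>UNIV. cnj (x$i) * cnj (M$k$i) * y$k)" by (rule sum.swap)
  also have "\<dots> = (\<Sum>k\<in>UNIV. y$k * cnj (y$k))"
    by (simp add: y_def matrix_vector_mult_def sum_distrib_left sum_distrib_right mult_ac)
  also have "\<dots> = of_real (\<Sum>k\<in>UNIV. (cmod (y$k))^2)" by (simp add: zcz)
  finally have eq: "(\<Sum>i\<in>UNIV. cnj (x$i) * ((mat_adj M ** M) *v x)$i) = of_real (\<Sum>k\<in>UNIV. (cmod (y$k))^2)" .
  show "Im (\<Sum>i\<in>UNIV. cnj (x$i) * ((mat_adj M ** M) *v x)$i) = 0" unfolding eq by simp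
  show "Re (\<Sum>i\<in>UNIV. cnj (x$i) * ((mat_adj M ** M) *v x)$i) \<ge> 0" unfolding eq by (simp add: sum_nonneg)
qed

definition SM :: "cmat2 \<Rightarrow> cmat2" where "SM M = sq2 (sq2 (mat_adj M ** M))"

lemma SM_facts: "psd_sqrt (mabs M) = SM M" "mabs M = sq2 (mat_adj M ** M)" "psd (mabs M)" "psd (SM M)"
proof -
  have m: "mabs M = sq2 (mat_adj M ** M)" "psd (sq2 (mat_adj M ** M))"
    using psd_sqrt_eq[OF psd_adjM[of M]] by (simp_all add: mabs_def)
  then show "mabs M = sq2 (mat_adj M ** M)" "psd (mabs M)" by simp_all
  show "psd_sqrt (mabs M) = SM M" "psd (SM M)"
    using psd_sqrt_eq[OF m(2)] m(1) by (simp_all add: SM_def)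
qed

lemma psd_norm_bound:
  assumes "psd (A::cmat2)"
  shows "(norm (sq2 A))^2 \<le> 2 * norm A"
proof -
  have "mat_adj (sq2 A) = sq2 A" using psd_sqrt_eq(2)[OF assms] by (simp add: psd_def)
  from herm_norm_sq[OF this] show ?thesis using psd_sqrt_eq(3)[OF assms] by simp
qed

lemma SM_norm: "(norm (SM M))^2 \<le> 8 * norm M"
proof -
  have "(norm (mabs M))^2 \<le> 2 * norm (mat_adj M ** M)"
    using psd_norm_bound[OF psd_adjM[of M]] SM_facts(2) by simp
  also have "\<dots> \<le> 2 * (8 * norm (mat_adj M) * norm M)"
    using norm_mm[of "mat_adj M" M] by (simp add: mult_ac)
  also have "\<dots> = (4 * norm M)^2" by (simp add: norm_adj power2_eq_square)
  finally have "norm (mabs M) \<le> 4 * norm M"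
    by (rule power2_le_imp_le) simp
  moreover have "(norm (SM M))^2 \<le> 2 * norm (mabs M)"
    using psd_norm_bound[OF SM_facts(3)[of M]] SM_facts(2)[of M] by (simp add: SM_def)
  ultimately show ?thesis by linarith
qed

lemma meas_cont:
  assumes "f \<in> borel_measurable M" "continuous_on UNIV g"
  shows "(\<lambda>x. g (f x)) \<in> borel_measurable M"
  using borel_measurable_continuous_on[OF assms(2) assms(1)] .

lemma meas_sq2:
  assumes h: "h \<in> borel_measurable M"
  shows "(\<lambda>x. sq2 (h x)) \<in> borel_measurable M"
proof -
  have e: "(\<lambda>x. h x $ i $ j) \<in> borel_measurable M" for i j using h by (rule meas_entry)
  define a where "a = (\<lambda>x. Re (h x $ 1 $ 1))"
  define c where "c = (\<lambda>x. Re (h x $ 2 $ 2))"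
  define z where "z = (\<lambda>x. h x $ 1 $ 2)"
  define d where "d = (\<lambda>x. sqrt (a x * c x - (cmod (z x))^2))"
  define t where "t = (\<lambda>x. sqrt (a x + c x + 2 * d x))"
  have ma: "a \<in> borel_measurable M" unfolding a_def by (rule meas_cont[OF e, where g=Re]) (intro continuous_intros)
  have mc: "c \<in> borel_measurable M" unfolding c_def by (rule meas_cont[OF e, where g=Re]) (intro continuous_intros)
  have mz: "z \<in> borel_measurable M" unfolding z_def by (rule e)
  have mk: "(\<lambda>x. (cmod (z x))^2) \<in> borel_measurable M" by (rule meas_cont[OF mz, where g="\<lambda>w. (cmod w)^2"]) (intro continuous_intros)
  have "(\<lambda>x. a x * c x - (cmod (z x))^2) \<in> borel_measurable M"
    using ma mc mk by (intro borel_measurable_diff borel_measurable_times)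
  then have md: "d \<in> borel_measurable M" unfolding d_def by (rule meas_cont[where g=sqrt]) (intro continuous_intros)
  have "(\<lambda>x. a x + c x + 2 * d x) \<in> borel_measurable M"
    using ma mc md by (intro borel_measurable_add borel_measurable_times borel_measurable_const)
  then have mt: "t \<in> borel_measurable M" unfolding t_def by (rule meas_cont[where g=sqrt]) (intro continuous_intros)
  have mt': "(\<lambda>x. complex_of_real (t x)) \<in> borel_measurable M" by (rule meas_cont[OF mt, where g=complex_of_real]) (intro continuous_intros)
  have m1: "(\<lambda>x. complex_of_real ((a x + d x) / t x)) \<in> borel_measurable M"
    using ma md mt by (intro meas_cont[where g=complex_of_real] borel_measurable_divide borel_measurable_add continuous_on_of_real_id)
  have m4: "(\<lambda>x. complex_of_real ((c x + d x) / t x)) \<in> borel_measurable M"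
    using mc md mt by (intro meas_cont[where g=complex_of_real] borel_measurable_divide borel_measurable_add continuous_on_of_real_id)
  have m2: "(\<lambda>x. z x / complex_of_real (t x)) \<in> borel_measurable M"
    using mz mt' by (rule borel_measurable_divide)
  have "(\<lambda>x. cnj (z x)) \<in> borel_measurable M" by (rule meas_cont[OF mz, where g=cnj]) (intro continuous_intros)
  then have m3: "(\<lambda>x. cnj (z x) / complex_of_real (t x)) \<in> borel_measurable M"
    using mt' by (rule borel_measurable_divide)
  have "(\<lambda>x. sq2 (h x)) = (\<lambda>x. mat2 (complex_of_real ((a x + d x) / t x)) (z x / complex_of_real (t x))
      (cnj (z x) / complex_of_real (t x)) (complex_of_real ((c x + d x) / t x)))"
    by (simp add: sq2_def Let_def a_def c_def z_def d_def t_def)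
  then show ?thesis using m1 m2 m3 m4 by (simp add: meas_mat2)
qed

lemma spectral_all:
  assumes nondeg: "(D, \<beta>) \<noteq> (0, 0)" and lam_ness: "lam \<notin> sigma_ess D \<beta> \<delta> \<alpha>"
  shows "\<exists>E EI mu. diagz E EI \<and> (\<forall>j. Re (mu j) \<noteq> 0) \<and>
     A_inf D \<beta> \<delta> \<alpha> lam = E ** dmat mu ** EI \<and>
     Qproj D \<beta> \<delta> \<alpha> lam = E ** dmat (\<lambda>j. if Re (mu j) < 0 then 1 else 0) ** EI"
proof -
  obtain m1 m2 where m: "Re m1 > 0" "Re m2 > 0" and A: "A_inf D \<beta> \<delta> \<alpha> lam = E4 m1 m2 ** dmat (mu4 m1 m2) ** EI4 m1 m2"
    using A_spec[OF nondeg lam_ness] by blast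
  have nz: "m1 \<noteq> 0" "m2 \<noteq> 0" using m by auto
  interpret diagz "E4 m1 m2" "EI4 m1 m2"
    using E4_inv[OF nz] by unfold_locales
  have re: "\<forall>j. Re (mu4 m1 m2 j) \<noteq> 0"
  proof
    fix j :: "2+2"
    show "Re (mu4 m1 m2 j) \<noteq> 0" using m by (cases j) (auto simp: mu4_def)
  qed
  have "Qproj D \<beta> \<delta> \<alpha> lam = E4 m1 m2 ** dmat (\<lambda>j. if Re (mu4 m1 m2 j) < 0 then 1 else 0) ** EI4 m1 m2"
    unfolding Qproj_def A using re by (intro cstable) auto
  then show ?thesis using A re diagz_axioms by blast
qed

lemma G_A_facts:
  assumes nondeg: "(D, \<beta>) \<noteq> (0, 0)" and lam_ness: "lam \<notin> sigma_ess D \<beta> \<delta> \<alpha>"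
  shows "\<forall>t. Qproj D \<beta> \<delta> \<alpha> lam ** mexp (t *\<^sub>R A_inf D \<beta> \<delta> \<alpha> lam) ** Qproj D \<beta> \<delta> \<alpha> lam
             = mexp (t *\<^sub>R A_inf D \<beta> \<delta> \<alpha> lam) ** Qproj D \<beta> \<delta> \<alpha> lam"
    and "\<forall>t. (mat 1 - Qproj D \<beta> \<delta> \<alpha> lam) ** mexp (t *\<^sub>R A_inf D \<beta> \<delta> \<alpha> lam) ** (mat 1 - Qproj D \<beta> \<delta> \<alpha> lam)
             = mexp (t *\<^sub>R A_inf D \<beta> \<delta> \<alpha> lam) ** (mat 1 - Qproj D \<beta> \<delta> \<alpha> lam)"
    and "G_A D \<beta> \<delta> \<alpha> lam \<in> borel_measurable borel"
    and "\<exists>K. \<forall>t. norm (G_A D \<beta> \<delta> \<alpha> lam t) \<le> K"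
proof -
  obtain E EI mu where dz: "diagz E EI" and re: "\<forall>j. Re (mu j) \<noteq> 0"
    and A: "A_inf D \<beta> \<delta> \<alpha> lam = E ** dmat mu ** EI"
    and Q: "Qproj D \<beta> \<delta> \<alpha> lam = E ** dmat (\<lambda>j. if Re (mu j) < 0 then 1 else 0) ** EI"
    using spectral_all[OF nondeg lam_ness] by blast
  interpret diagz E EI by (rule dz)
  define s where "s = (\<lambda>j. if Re (mu j) < 0 then 1 else (0::complex))"
  have Q': "Qproj D \<beta> \<delta> \<alpha> lam = E ** dmat s ** EI" using Q by (simp add: s_def)
  have ex: "mexp (t *\<^sub>R A_inf D \<beta> \<delta> \<alpha> lam) = E ** dmat (\<lambda>j. exp (t *\<^sub>R mu j)) ** EI" for t
    unfolding A cscaleR cexp by simp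
  have IQ: "mat 1 - Qproj D \<beta> \<delta> \<alpha> lam = E ** dmat (\<lambda>j. 1 - s j) ** EI"
    unfolding Q' by (subst cmat[of 1]) (rule cdiff)
  have ss: "s j * s j = s j" for j by (simp add: s_def)
  show "\<forall>t. Qproj D \<beta> \<delta> \<alpha> lam ** mexp (t *\<^sub>R A_inf D \<beta> \<delta> \<alpha> lam) ** Qproj D \<beta> \<delta> \<alpha> lam
             = mexp (t *\<^sub>R A_inf D \<beta> \<delta> \<alpha> lam) ** Qproj D \<beta> \<delta> \<alpha> lam"
    unfolding Q' ex cmult by (simp add: mult.assoc[symmetric] mult.commute[of "s _"] ss) (simp add: mult.assoc ss)
  show "\<forall>t. (mat 1 - Qproj D \<beta> \<delta> \<alpha> lam) ** mexp (t *\<^sub>R A_inf D \<beta> \<delta> \<alpha> lam) ** (mat 1 - Qproj D \<beta> \<delta> \<alpha> lam)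
             = mexp (t *\<^sub>R A_inf D \<beta> \<delta> \<alpha> lam) ** (mat 1 - Qproj D \<beta> \<delta> \<alpha> lam)"
  proof
    fix t
    have "(1 - s j) * (1 - s j) = 1 - s j" for j by (simp add: s_def)
    then show "(mat 1 - Qproj D \<beta> \<delta> \<alpha> lam) ** mexp (t *\<^sub>R A_inf D \<beta> \<delta> \<alpha> lam) ** (mat 1 - Qproj D \<beta> \<delta> \<alpha> lam)
             = mexp (t *\<^sub>R A_inf D \<beta> \<delta> \<alpha> lam) ** (mat 1 - Qproj D \<beta> \<delta> \<alpha> lam)"
      unfolding IQ ex cmult by (metis (no_types, lifting) mult.commute mult.left_commute)
  qed
  define g where "g = (\<lambda>t j. if 0 \<le> t then - (exp (t *\<^sub>R mu j) * s j) else exp (t *\<^sub>R mu j) * (1 - s j))"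
  have G: "G_A D \<beta> \<delta> \<alpha> lam t = E ** dmat (g t) ** EI" for t
    unfolding G_A_def ex Q' IQ[unfolded Q'] cmult cuminus by (simp add: g_def)
  have gb: "cmod (g t j) \<le> 1" for t j
  proof -
    have ce: "cmod (exp (t *\<^sub>R mu j)) = exp (t * Re (mu j))" by (simp add: norm_exp_eq_Re)
    show ?thesis
    proof (cases "0 \<le> t")
      case True
      show ?thesis
      proof (cases "Re (mu j) < 0")
        case True
        then have "t * Re (mu j) \<le> 0" using \<open>0 \<le> t\<close> by (simp add: mult_nonneg_nonpos)
        then show ?thesis using \<open>0 \<le> t\<close> True by (simp add: g_def s_def norm_mult ce)
      qed (use True in \<open>simp add: g_def s_def\<close>)
    next
      case False
      show ?thesis
      proof (cases "Re (mu j) < 0")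
        case False
        then have "t * Re (mu j) \<le> 0" using \<open>\<not> 0 \<le> t\<close> by (simp add: mult_nonpos_nonneg)
        then show ?thesis using \<open>\<not> 0 \<le> t\<close> False by (simp add: g_def s_def norm_mult ce)
      qed (use False in \<open>simp add: g_def s_def\<close>)
    qed
  qed
  have nd: "norm (dmat (g t)) \<le> 4" for t
  proof -
    have "norm (dmat (g t)) \<le> (\<Sum>i\<in>UNIV. \<Sum>j\<in>UNIV. cmod (dmat (g t) $ i $ j))" by (rule norm_mat_le_sum)
    also have "\<dots> = (\<Sum>i\<in>(UNIV::(2+2) set). cmod (g t i))"
      by (simp add: dmat_nth if_distrib cong: if_cong)
    also have "\<dots> \<le> (\<Sum>i\<in>(UNIV::(2+2) set). 1)" by (intro sum_mono gb)
    finally show ?thesis by simp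
  qed
  show "\<exists>K. \<forall>t. norm (G_A D \<beta> \<delta> \<alpha> lam t) \<le> K"
  proof (intro exI allI)
    fix t
    have "norm (G_A D \<beta> \<delta> \<alpha> lam t) \<le> 64 * norm (E ** dmat (g t)) * norm EI"
      unfolding G using norm_mm[of "E ** dmat (g t)" EI] by simp
    also have "\<dots> \<le> 64 * (64 * norm E * norm (dmat (g t))) * norm EI"
      using norm_mm[of E "dmat (g t)"] by (intro mult_right_mono mult_left_mono) auto
    also have "\<dots> \<le> 64 * (64 * norm E * 4) * norm EI"
      using nd[of t] by (intro mult_right_mono mult_left_mono) auto
    finally show "norm (G_A D \<beta> \<delta> \<alpha> lam t) \<le> 64 * (64 * norm E * 4) * norm EI" .
  qed
  have mg: "(\<lambda>t. dmat (g t)) \<in> borel_measurable borel"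
  proof (rule meas_mat)
    fix i j :: "2+2"
    have me: "(\<lambda>t::real. exp (t *\<^sub>R mu i)) \<in> borel_measurable borel"
      by (intro borel_measurable_continuous_onI continuous_intros)
    have "(\<lambda>t. g t i) \<in> borel_measurable borel"
      unfolding g_def using me by measurable
    then show "(\<lambda>t. dmat (g t) $ i $ j) \<in> borel_measurable borel"
      by (simp add: dmat_nth)
  qed
  have "(\<lambda>t. E ** dmat (g t) ** EI) \<in> borel_measurable borel"
    by (intro meas_mm mg borel_measurable_const)
  then show "G_A D \<beta> \<delta> \<alpha> lam \<in> borel_measurable borel"
    using G by (metis (no_types, lifting) ext)
qed

lemma nn_exp_half:
  assumes b: "b > 0"
  shows "(\<integral>\<^sup>+x. ennreal (if x \<in> {0..} then exp (- b * x) else 0) \<partial>lborel) = ennreal (1 / b)"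
proof -
  have "((\<lambda>x::real. exp (-b*x)) has_integral exp (-b*0)/b) {0..}"
    by (rule has_integral_exp_minus_to_infinity[OF b])
  then have "((\<lambda>x::real. if x \<in> {0..} then exp (- b * x) else 0) has_integral 1/b) UNIV"
    by (subst has_integral_restrict_UNIV) simp
  then show ?thesis
    by (intro nn_integral_has_integral_lborel) auto
qed

lemma nn_exp_abs:
  assumes b: "b > 0"
  shows "(\<integral>\<^sup>+x. ennreal (exp (- b * \<bar>x\<bar>)) \<partial>lborel) < \<infinity>"
proof -
  define g where "g = (\<lambda>x::real. if x \<in> {0..} then exp (- b * x) else 0)"
  have gm[measurable]: "g \<in> borel_measurable borel" unfolding g_def by measurable
  have I1: "(\<integral>\<^sup>+x. ennreal (g x) \<partial>lborel) = ennreal (1/b)" using nn_exp_half[OF b] by (simp add: g_def)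
  have "(\<integral>\<^sup>+x. ennreal (g x) \<partial>lborel) = ennreal \<bar>-1\<bar> * (\<integral>\<^sup>+x. ennreal (g (0 + (-1) * x)) \<partial>lborel)"
    by (rule nn_integral_real_affine) auto
  then have I2: "(\<integral>\<^sup>+x. ennreal (g (- x)) \<partial>lborel) = ennreal (1/b)" using I1 by simp
  have "(\<integral>\<^sup>+x. ennreal (exp (- b * \<bar>x\<bar>)) \<partial>lborel) \<le> (\<integral>\<^sup>+x. ennreal (g x) + ennreal (g (- x)) \<partial>lborel)"
  proof (rule nn_integral_mono)
    fix x :: real
    show "ennreal (exp (- b * \<bar>x\<bar>)) \<le> ennreal (g x) + ennreal (g (- x))"
      by (cases "x \<ge> 0") (auto simp: g_def)
  qed
  also have "\<dots> = ennreal (1/b) + ennreal (1/b)"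
    by (subst nn_integral_add) (auto simp: I1 I2)
  also have "\<dots> < \<infinity>" by simp
  finally show ?thesis .
qed

lemma integrable_exp_abs:
  assumes b: "b > 0"
  shows "integrable lborel (\<lambda>x::real. exp (- b * \<bar>x\<bar>))"
  by (rule integrableI_bounded) (use nn_exp_abs[OF b] in auto)

lemma integrable_exp_abs2:
  assumes b: "b > 0"
  shows "integrable (lborel \<Otimes>\<^sub>M lborel) (\<lambda>(x::real, y::real). exp (- b * \<bar>x\<bar>) * exp (- b * \<bar>y\<bar>))"
proof (rule integrableI_bounded)
  show "(\<lambda>(x::real, y::real). exp (- b * \<bar>x\<bar>) * exp (- b * \<bar>y\<bar>)) \<in> borel_measurable (lborel \<Otimes>\<^sub>M lborel)"
    by measurable
  define I where "I = (\<integral>\<^sup>+x. ennreal (exp (- b * \<bar>x\<bar>)) \<partial>lborel)"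
  have "(\<integral>\<^sup>+p. ennreal (norm ((\<lambda>(x::real, y::real). exp (- b * \<bar>x\<bar>) * exp (- b * \<bar>y\<bar>)) p)) \<partial>(lborel \<Otimes>\<^sub>M lborel))
     = (\<integral>\<^sup>+x. \<integral>\<^sup>+y. ennreal (exp (- b * \<bar>x\<bar>)) * ennreal (exp (- b * \<bar>y\<bar>)) \<partial>lborel \<partial>lborel)"
    by (subst lborel.nn_integral_fst[symmetric]) (auto simp: ennreal_mult)
  also have "\<dots> = (\<integral>\<^sup>+x. ennreal (exp (- b * \<bar>x\<bar>)) * I \<partial>lborel)"
    by (subst nn_integral_cmult) (auto simp: I_def)
  also have "\<dots> = I * I"
    by (subst nn_integral_multc) (auto simp: I_def)
  also have "\<dots> < \<infinity>" using nn_exp_abs[OF b] by (simp add: I_def ennreal_mult_less_top)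
  finally show "(\<integral>\<^sup>+p. ennreal (norm ((\<lambda>(x::real, y::real). exp (- b * \<bar>x\<bar>) * exp (- b * \<bar>y\<bar>)) p)) \<partial>(lborel \<Otimes>\<^sub>M lborel)) < \<infinity>" .
qed

lemma mm_uminus_right: "(A::complex^'n^'m) ** (- B) = - (A ** (B::complex^'k^'n))"
  by (simp add: vec_eq_iff matrix_matrix_mult_def sum_negf)

lemma mm_uminus_left: "(- (A::complex^'n^'m)) ** B = - (A ** (B::complex^'k^'n))"
  by (simp add: vec_eq_iff matrix_matrix_mult_def sum_negf)

lemma norm_mat2_le: "norm (mat2 a b c d) \<le> cmod a + cmod b + cmod c + cmod d"
  using norm_mat_le_sum[of "mat2 a b c d"] by (simp add: sum_2)

lemma norm_block4_le: "norm (block4 A B C D) \<le> 16 * (norm A + norm B + norm C + norm D)"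
proof -
  have e: "cmod (block4 A B C D $ i $ j) \<le> norm A + norm B + norm C + norm D" for i j
    using entry_le_norm[of A] entry_le_norm[of B] entry_le_norm[of C] entry_le_norm[of D]
    by (cases i; cases j) (simp_all add: add_increasing add_increasing2)
  have "norm (block4 A B C D) \<le> (\<Sum>i\<in>UNIV. \<Sum>j\<in>UNIV. cmod (block4 A B C D $ i $ j))" by (rule norm_mat_le_sum)
  also have "\<dots> \<le> (\<Sum>i\<in>(UNIV::(2+2) set). \<Sum>j\<in>(UNIV::(2+2) set). norm A + norm B + norm C + norm D)"
    by (intro sum_mono e)
  finally show ?thesis by simp
qed

lemma unitary_norm:
  assumes "mat_adj (V::cmat2) ** V = mat 1"
  shows "norm V \<le> 2"
proof -
  have c: "(\<Sum>i\<in>UNIV. (cmod (V$i$j))^2) = 1" for j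
  proof -
    have "(mat_adj V ** V)$j$j = (\<Sum>i\<in>UNIV. cnj (V$i$j) * V$i$j)"
      by (simp add: matrix_matrix_mult_def mat_adj_def)
    also have "\<dots> = (\<Sum>i\<in>UNIV. of_real ((cmod (V$i$j))^2))"
      by (intro sum.cong refl) (metis zcz mult.commute)
    also have "\<dots> = of_real (\<Sum>i\<in>UNIV. (cmod (V$i$j))^2)"
      by (rule of_real_sum[symmetric])
    finally have "(mat_adj V ** V)$j$j = of_real (\<Sum>i\<in>UNIV. (cmod (V$i$j))^2)" .
    moreover have "(mat_adj V ** V)$j$j = 1" using assms by (simp add: mat_def)
    ultimately have "(of_real (\<Sum>i\<in>UNIV. (cmod (V$i$j))^2) :: complex) = 1" by simp
    then show ?thesis using of_real_eq_1_iff by blast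
  qed
  have "(norm V)^2 = (\<Sum>j\<in>UNIV. \<Sum>i\<in>UNIV. (cmod (V$i$j))^2)"
    unfolding norm_mat_sq by (rule sum.swap)
  also have "\<dots> = 2" using c by simp
  finally have "(norm V)^2 \<le> 2^2" by simp
  then show ?thesis by (rule power2_le_imp_le) simp
qed

lemma meas_mat_adj:
  assumes "f \<in> borel_measurable M"
  shows "(\<lambda>x. mat_adj (f x :: complex^'n^'n)) \<in> borel_measurable M"
proof (rule meas_mat)
  fix i j
  have "(\<lambda>x. f x $ j $ i) \<in> borel_measurable M" using assms by (rule meas_entry)
  then have "(\<lambda>x. cnj (f x $ j $ i)) \<in> borel_measurable M"
    by (rule meas_cont[where g=cnj]) (intro continuous_intros)
  then show "(\<lambda>x. mat_adj (f x) $ i $ j) \<in> borel_measurable M" by (simp add: mat_adj_def)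
qed

lemma meas_Mpot:
  assumes psi: "\<psi> \<in> borel_measurable borel"
  shows "Mpot \<epsilon> \<gamma> \<mu> \<nu> \<psi> \<in> borel_measurable borel"
proof -
  have r: "(\<lambda>x. complex_of_real (f (\<psi> x))) \<in> borel_measurable borel" if "continuous_on UNIV f" for f :: "complex \<Rightarrow> real"
    using meas_cont[OF meas_cont[OF psi that], where g=complex_of_real] continuous_on_of_real_id by blast
  have c: "(\<lambda>x. c) \<in> borel_measurable borel" for c :: cmat2 by simp
  have mr: "(\<lambda>x. complex_of_real (f x)) \<in> borel_measurable borel" if "f \<in> borel_measurable borel" for f :: "real \<Rightarrow> real"
    by (rule meas_cont[OF that, where g=complex_of_real]) (intro continuous_intros)
  have mRe: "(\<lambda>x. Re (\<psi> x)) \<in> borel_measurable borel"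
    by (rule meas_cont[OF psi, where g=Re]) (intro continuous_intros)
  have mIm: "(\<lambda>x. Im (\<psi> x)) \<in> borel_measurable borel"
    by (rule meas_cont[OF psi, where g=Im]) (intro continuous_intros)
  have mcm: "(\<lambda>x. cmod (\<psi> x)) \<in> borel_measurable borel"
    by (rule meas_cont[OF psi, where g=cmod]) (intro continuous_intros)
  have m0: "(\<lambda>x. complex_of_real 0) \<in> borel_measurable borel" by simp
  have "(\<lambda>x. mat2 (complex_of_real ((cmod (\<psi> x))^2)) 0 0 (complex_of_real ((cmod (\<psi> x))^2)) ** N1 \<epsilon> \<gamma>
        + mat2 (complex_of_real ((cmod (\<psi> x))^4)) 0 0 (complex_of_real ((cmod (\<psi> x))^4)) ** N2 \<mu> \<nu>
        + (mat2 2 0 0 2 ** N1 \<epsilon> \<gamma> + mat2 (4 * complex_of_real ((cmod (\<psi> x))^2)) 0 0 (4 * complex_of_real ((cmod (\<psi> x))^2)) ** N2 \<mu> \<nu>)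
          ** mat2 (complex_of_real (Re (\<psi> x) * Re (\<psi> x))) (complex_of_real (Re (\<psi> x) * Im (\<psi> x)))
                  (complex_of_real (Im (\<psi> x) * Re (\<psi> x))) (complex_of_real (Im (\<psi> x) * Im (\<psi> x))))
     \<in> borel_measurable borel"
    by (intro borel_measurable_add meas_mm c meas_mat2 borel_measurable_times borel_measurable_const
        mr borel_measurable_power mRe mIm mcm)
  moreover have "Mpot \<epsilon> \<gamma> \<mu> \<nu> \<psi> = (\<lambda>x. mat2 (complex_of_real ((cmod (\<psi> x))^2)) 0 0 (complex_of_real ((cmod (\<psi> x))^2)) ** N1 \<epsilon> \<gamma>
        + mat2 (complex_of_real ((cmod (\<psi> x))^4)) 0 0 (complex_of_real ((cmod (\<psi> x))^4)) ** N2 \<mu> \<nu>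
        + (mat2 2 0 0 2 ** N1 \<epsilon> \<gamma> + mat2 (4 * complex_of_real ((cmod (\<psi> x))^2)) 0 0 (4 * complex_of_real ((cmod (\<psi> x))^2)) ** N2 \<mu> \<nu>)
          ** mat2 (complex_of_real (Re (\<psi> x) * Re (\<psi> x))) (complex_of_real (Re (\<psi> x) * Im (\<psi> x)))
                  (complex_of_real (Im (\<psi> x) * Re (\<psi> x))) (complex_of_real (Im (\<psi> x) * Im (\<psi> x))))"
    by (simp add: Mpot_def Let_def fun_eq_iff)
  ultimately show ?thesis by simp
qed

lemma Mpot_bound:
  assumes C: "C \<ge> 0"
  shows "\<exists>K. \<forall>x. cmod (\<psi> x) \<le> C \<longrightarrow> norm (Mpot \<epsilon> \<gamma> \<mu> \<nu> \<psi> x) \<le> K * (cmod (\<psi> x))^2"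
proof -
  define n1 where "n1 = norm (N1 \<epsilon> \<gamma>)"
  define n2 where "n2 = norm (N2 \<mu> \<nu>)"
  define K where "K = 16 * n1 + 16 * C^2 * n2 + 32 * (32 * n1 + 64 * C^2 * n2)"
  have "norm (Mpot \<epsilon> \<gamma> \<mu> \<nu> \<psi> x) \<le> K * (cmod (\<psi> x))^2" if rC: "cmod (\<psi> x) \<le> C" for x
  proof -
    define r where "r = cmod (\<psi> x)"
    define u where "u = Re (\<psi> x)"
    define w where "w = Im (\<psi> x)"
    have r0: "r \<ge> 0" by (simp add: r_def)
    have ur: "\<bar>u\<bar> \<le> r" and wr: "\<bar>w\<bar> \<le> r" by (simp_all add: r_def u_def w_def abs_Re_le_cmod abs_Im_le_cmod)
    have r2: "r^2 \<le> C^2" using rC r0 by (simp add: r_def power_mono)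
    have r4: "r^4 \<le> C^2 * r^2"
    proof -
      have "r^4 = r^2 * r^2" by (simp add: power2_eq_square power4_eq_xxxx)
      also have "\<dots> \<le> C^2 * r^2" using r2 by (intro mult_right_mono) auto
      finally show ?thesis .
    qed
    define X1 where "X1 = mat2 (complex_of_real (r^2)) 0 0 (complex_of_real (r^2))"
    define X2 where "X2 = mat2 (complex_of_real (r^4)) 0 0 (complex_of_real (r^4))"
    define Y where "Y = mat2 2 0 0 2 ** N1 \<epsilon> \<gamma> + mat2 (4 * complex_of_real (r^2)) 0 0 (4 * complex_of_real (r^2)) ** N2 \<mu> \<nu>"
    define P where "P = mat2 (complex_of_real (u*u)) (complex_of_real (u*w)) (complex_of_real (w*u)) (complex_of_real (w*w))"
    have M: "Mpot \<epsilon> \<gamma> \<mu> \<nu> \<psi> x = X1 ** N1 \<epsilon> \<gamma> + X2 ** N2 \<mu> \<nu> + Y ** P"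
      by (simp add: Mpot_def Let_def X1_def X2_def Y_def P_def r_def u_def w_def)
    have nX1: "norm X1 \<le> 2 * r^2" using norm_mat2_le[of "complex_of_real (r^2)" 0 0 "complex_of_real (r^2)"] r0
      by (simp add: X1_def norm_power)
    have nX2: "norm X2 \<le> 2 * r^4" using norm_mat2_le[of "complex_of_real (r^4)" 0 0 "complex_of_real (r^4)"] r0
      by (simp add: X2_def norm_power)
    have nP: "norm P \<le> 4 * r^2"
    proof -
      have "\<bar>u\<bar>*\<bar>u\<bar> \<le> r*r" "\<bar>u\<bar>*\<bar>w\<bar> \<le> r*r" "\<bar>w\<bar>*\<bar>u\<bar> \<le> r*r" "\<bar>w\<bar>*\<bar>w\<bar> \<le> r*r"
        using ur wr r0 by (intro mult_mono; simp)+
      then have "\<bar>u*u\<bar> \<le> r*r" "\<bar>u*w\<bar> \<le> r*r" "\<bar>w*u\<bar> \<le> r*r" "\<bar>w*w\<bar> \<le> r*r"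
        by (simp_all only: abs_mult)
      then show ?thesis using norm_mat2_le[of "complex_of_real (u*u)" "complex_of_real (u*w)" "complex_of_real (w*u)" "complex_of_real (w*w)"]
        by (simp add: P_def power2_eq_square del: of_real_mult)
    qed
    have nY: "norm Y \<le> 32 * n1 + 64 * r^2 * n2"
    proof -
      have "norm (mat2 (2::complex) 0 0 2) \<le> 4" using norm_mat2_le[of "2::complex" 0 0 2] by simp
      moreover have "norm (mat2 (4 * complex_of_real (r^2)) 0 0 (4 * complex_of_real (r^2))) \<le> 8 * r^2"
        using norm_mat2_le[of "4 * complex_of_real (r^2)" 0 0 "4 * complex_of_real (r^2)"] r0 by (simp add: norm_mult norm_power)
      moreover have nYa: "norm Y \<le> 8 * norm (mat2 (2::complex) 0 0 2) * n1 + 8 * norm (mat2 (4 * complex_of_real (r^2)) 0 0 (4 * complex_of_real (r^2))) * n2"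
        unfolding Y_def n1_def n2_def
        using norm_mm[of "mat2 (2::complex) 0 0 2" "N1 \<epsilon> \<gamma>"] norm_mm[of "mat2 (4 * complex_of_real (r^2)) 0 0 (4 * complex_of_real (r^2))" "N2 \<mu> \<nu>"]
          norm_triangle_ineq[of "mat2 (2::complex) 0 0 2 ** N1 \<epsilon> \<gamma>" "mat2 (4 * complex_of_real (r^2)) 0 0 (4 * complex_of_real (r^2)) ** N2 \<mu> \<nu>"]
        by simp
      moreover have "n1 \<ge> 0" "n2 \<ge> 0" by (simp_all add: n1_def n2_def)
      ultimately have "8 * norm (mat2 (2::complex) 0 0 2) * n1 \<le> 8 * 4 * n1"
          "8 * norm (mat2 (4 * complex_of_real (r^2)) 0 0 (4 * complex_of_real (r^2))) * n2 \<le> 8 * (8 * r^2) * n2"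
        by (intro mult_right_mono mult_left_mono; simp)+
      then show ?thesis using nYa by (simp add: algebra_simps)
    qed
    have "norm (Mpot \<epsilon> \<gamma> \<mu> \<nu> \<psi> x) \<le> norm (X1 ** N1 \<epsilon> \<gamma>) + norm (X2 ** N2 \<mu> \<nu>) + norm (Y ** P)"
      unfolding M by (rule order_trans[OF norm_triangle_ineq add_right_mono[OF norm_triangle_ineq]])
    also have "\<dots> \<le> 8 * norm X1 * n1 + 8 * norm X2 * n2 + 8 * norm Y * norm P"
      using norm_mm[of X1 "N1 \<epsilon> \<gamma>"] norm_mm[of X2 "N2 \<mu> \<nu>"] norm_mm[of Y P] by (simp add: n1_def n2_def)
    also have "\<dots> \<le> 8 * (2 * r^2) * n1 + 8 * (2 * (C^2 * r^2)) * n2 + 8 * (32 * n1 + 64 * C^2 * n2) * (4 * r^2)"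
    proof -
      have n12: "n1 \<ge> 0" "n2 \<ge> 0" by (simp_all add: n1_def n2_def)
      have a: "8 * norm X1 * n1 \<le> 8 * (2 * r^2) * n1" using nX1 n12 by (simp add: mult_right_mono)
      have b: "8 * norm X2 * n2 \<le> 8 * (2 * (C^2 * r^2)) * n2" using nX2 r4 n12
        by (intro mult_right_mono mult_left_mono) auto
      have "r^2 * n2 \<le> C^2 * n2" using r2 n12 by (intro mult_right_mono) auto
      then have Y': "norm Y \<le> 32 * n1 + 64 * C^2 * n2"
        using nY by (simp add: algebra_simps)
      have c: "8 * norm Y * norm P \<le> 8 * (32 * n1 + 64 * C^2 * n2) * (4 * r^2)"
        using Y' nP n12 by (intro mult_mono mult_left_mono) auto
      show ?thesis using a b c by linarith
    qed
    also have "\<dots> = K * r^2" by (simp add: K_def algebra_simps)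
    finally show ?thesis by (simp add: r_def)
  qed
  then show ?thesis by blast
qed

theorem proposition6p2:
  fixes D \<beta> \<delta> \<alpha> \<epsilon> \<gamma> \<mu> \<nu> C a :: real
    and \<psi> \<psi>' \<psi>'' :: "real \<Rightarrow> complex"
    and V :: "real \<Rightarrow> complex^2^2"
    and lam :: complex
  assumes beta_nonneg: "\<beta> \<ge> 0"
    and nondeg: "(D, \<beta>) \<noteq> (0, 0)"
    and deriv1: "\<And>x. (\<psi> has_vector_derivative \<psi>' x) (at x)"
    and deriv2: "\<And>x. (\<psi>' has_vector_derivative \<psi>'' x) (at x)"
    and pulse: "\<And>x. of_real \<alpha> * \<psi> x + of_real (D/2) * \<psi>'' x
                    + of_real \<gamma> * (cmod (\<psi> x))^2 * \<psi> x + of_real \<nu> * (cmod (\<psi> x))^4 * \<psi> x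
                  = \<i> * of_real \<delta> * \<psi> x + \<i> * of_real \<epsilon> * (cmod (\<psi> x))^2 * \<psi> x
                    + \<i> * of_real \<beta> * \<psi>'' x + \<i> * of_real \<mu> * (cmod (\<psi> x))^4 * \<psi> x"
    and C_pos: "C > 0" and a_pos: "a > 0"
    and decay: "\<And>x. cmod (\<psi> x) \<le> C * exp (- a * \<bar>x\<bar>)"
    and polar: "\<And>x. Mpot \<epsilon> \<gamma> \<mu> \<nu> \<psi> x = V x ** mabs (Mpot \<epsilon> \<gamma> \<mu> \<nu> \<psi> x)"
    and V_unitary: "\<And>x. mat_adj (V x) ** V x = mat 1"
    and V_meas: "V \<in> borel_measurable lborel"
    and lam_ness: "lam \<notin> sigma_ess D \<beta> \<delta> \<alpha>"
  shows "HS_integral_operator (BS_op D \<beta> \<delta> \<alpha> \<epsilon> \<gamma> \<mu> \<nu> \<psi> V lam)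
           (BS_kernel D \<beta> \<delta> \<alpha> \<epsilon> \<gamma> \<mu> \<nu> \<psi> V lam)
       \<and> (\<forall>x y. BS_kernel D \<beta> \<delta> \<alpha> \<epsilon> \<gamma> \<mu> \<nu> \<psi> V lam x y =
           (if x \<ge> y then
              - (R_r \<epsilon> \<gamma> \<mu> \<nu> \<psi> x ** Qproj D \<beta> \<delta> \<alpha> lam
                 ** mexp ((x - y) *\<^sub>R A_inf D \<beta> \<delta> \<alpha> lam) ** Qproj D \<beta> \<delta> \<alpha> lam
                 ** R_l D \<beta> \<epsilon> \<gamma> \<mu> \<nu> \<psi> V y)
            else
              R_r \<epsilon> \<gamma> \<mu> \<nu> \<psi> x ** (mat 1 - Qproj D \<beta> \<delta> \<alpha> lam)
                 ** mexp ((x - y) *\<^sub>R A_inf D \<beta> \<delta> \<alpha> lam) ** (mat 1 - Qproj D \<beta> \<delta> \<alpha> lam)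
                 ** R_l D \<beta> \<epsilon> \<gamma> \<mu> \<nu> \<psi> V y))"
proof -
  define Q where "Q = Qproj D \<beta> \<delta> \<alpha> lam"
  define Ainf where "Ainf = A_inf D \<beta> \<delta> \<alpha> lam"
  define G where "G = G_A D \<beta> \<delta> \<alpha> lam"
  define Sx where "Sx = (\<lambda>x. SM (Mpot \<epsilon> \<gamma> \<mu> \<nu> \<psi> x))"
  define Bi where "Bi = matrix_inv (Bm D \<beta>)"
  define k where "k = BS_kernel D \<beta> \<delta> \<alpha> \<epsilon> \<gamma> \<mu> \<nu> \<psi> V lam"
  have Sx: "psd_sqrt (mabs (Mpot \<epsilon> \<gamma> \<mu> \<nu> \<psi> x)) = Sx x" for x unfolding Sx_def by (rule SM_facts(1))
  have Rr: "R_r \<epsilon> \<gamma> \<mu> \<nu> \<psi> x = block4 (Sx x) 0 0 0" for x by (simp add: R_r_def Sx)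
  have Rl: "R_l D \<beta> \<epsilon> \<gamma> \<mu> \<nu> \<psi> V y = block4 0 0 (- (Bi ** V y ** Sx y)) 0" for y
    by (simp add: R_l_def Sx Bi_def)
  have kk: "k x y = R_r \<epsilon> \<gamma> \<mu> \<nu> \<psi> x ** G (x - y) ** R_l D \<beta> \<epsilon> \<gamma> \<mu> \<nu> \<psi> V y" for x y
    by (simp add: k_def G_def BS_kernel_def)
  have F1: "Q ** mexp (t *\<^sub>R Ainf) ** Q = mexp (t *\<^sub>R Ainf) ** Q" for t
    using G_A_facts(1)[OF nondeg lam_ness] by (simp add: Q_def Ainf_def)
  have F2: "(mat 1 - Q) ** mexp (t *\<^sub>R Ainf) ** (mat 1 - Q) = mexp (t *\<^sub>R Ainf) ** (mat 1 - Q)" for t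
    using G_A_facts(2)[OF nondeg lam_ness] by (simp add: Q_def Ainf_def)
  have part2: "\<forall>x y. BS_kernel D \<beta> \<delta> \<alpha> \<epsilon> \<gamma> \<mu> \<nu> \<psi> V lam x y =
           (if x \<ge> y then
              - (R_r \<epsilon> \<gamma> \<mu> \<nu> \<psi> x ** Qproj D \<beta> \<delta> \<alpha> lam
                 ** mexp ((x - y) *\<^sub>R A_inf D \<beta> \<delta> \<alpha> lam) ** Qproj D \<beta> \<delta> \<alpha> lam
                 ** R_l D \<beta> \<epsilon> \<gamma> \<mu> \<nu> \<psi> V y)
            else
              R_r \<epsilon> \<gamma> \<mu> \<nu> \<psi> x ** (mat 1 - Qproj D \<beta> \<delta> \<alpha> lam)
                 ** mexp ((x - y) *\<^sub>R A_inf D \<beta> \<delta> \<alpha> lam) ** (mat 1 - Qproj D \<beta> \<delta> \<alpha> lam)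
                 ** R_l D \<beta> \<epsilon> \<gamma> \<mu> \<nu> \<psi> V y)"
  proof (intro allI)
    fix x y :: real
    let ?Rr = "R_r \<epsilon> \<gamma> \<mu> \<nu> \<psi> x" and ?Rl = "R_l D \<beta> \<epsilon> \<gamma> \<mu> \<nu> \<psi> V y"
    let ?e = "mexp ((x - y) *\<^sub>R Ainf)"
    show "BS_kernel D \<beta> \<delta> \<alpha> \<epsilon> \<gamma> \<mu> \<nu> \<psi> V lam x y =
           (if x \<ge> y then
              - (R_r \<epsilon> \<gamma> \<mu> \<nu> \<psi> x ** Qproj D \<beta> \<delta> \<alpha> lam
                 ** mexp ((x - y) *\<^sub>R A_inf D \<beta> \<delta> \<alpha> lam) ** Qproj D \<beta> \<delta> \<alpha> lam
                 ** R_l D \<beta> \<epsilon> \<gamma> \<mu> \<nu> \<psi> V y)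
            else
              R_r \<epsilon> \<gamma> \<mu> \<nu> \<psi> x ** (mat 1 - Qproj D \<beta> \<delta> \<alpha> lam)
                 ** mexp ((x - y) *\<^sub>R A_inf D \<beta> \<delta> \<alpha> lam) ** (mat 1 - Qproj D \<beta> \<delta> \<alpha> lam)
                 ** R_l D \<beta> \<epsilon> \<gamma> \<mu> \<nu> \<psi> V y)"
    proof (cases "x \<ge> y")
      case True
      have "BS_kernel D \<beta> \<delta> \<alpha> \<epsilon> \<gamma> \<mu> \<nu> \<psi> V lam x y = ?Rr ** (- (?e ** Q)) ** ?Rl"
        using True by (simp add: BS_kernel_def G_A_def Q_def Ainf_def)
      also have "\<dots> = - (?Rr ** (?e ** Q) ** ?Rl)" by (simp add: mm_uminus_right mm_uminus_left)
      also have "?Rr ** (?e ** Q) ** ?Rl = ?Rr ** (Q ** ?e ** Q) ** ?Rl" by (simp add: F1)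
      also have "\<dots> = ?Rr ** Q ** ?e ** Q ** ?Rl" by (simp add: matrix_mul_assoc)
      finally show ?thesis using True by (simp add: Q_def Ainf_def)
    next
      case False
      have "BS_kernel D \<beta> \<delta> \<alpha> \<epsilon> \<gamma> \<mu> \<nu> \<psi> V lam x y = ?Rr ** (?e ** (mat 1 - Q)) ** ?Rl"
        using False by (simp add: BS_kernel_def G_A_def Q_def Ainf_def)
      also have "\<dots> = ?Rr ** ((mat 1 - Q) ** ?e ** (mat 1 - Q)) ** ?Rl" by (simp add: F2)
      also have "\<dots> = ?Rr ** (mat 1 - Q) ** ?e ** (mat 1 - Q) ** ?Rl" by (simp add: matrix_mul_assoc)
      finally show ?thesis using False by (simp add: Q_def Ainf_def)
    qed
  qed
  have "continuous_on UNIV \<psi>"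
    by (intro continuous_at_imp_continuous_on ballI has_vector_derivative_continuous[OF deriv1])
  then have mpsi: "\<psi> \<in> borel_measurable borel" by (rule borel_measurable_continuous_onI)
  have mM: "Mpot \<epsilon> \<gamma> \<mu> \<nu> \<psi> \<in> borel_measurable borel" by (rule meas_Mpot[OF mpsi])
  have mS: "Sx \<in> borel_measurable borel"
  proof -
    have "(\<lambda>x. mat_adj (Mpot \<epsilon> \<gamma> \<mu> \<nu> \<psi> x) ** Mpot \<epsilon> \<gamma> \<mu> \<nu> \<psi> x) \<in> borel_measurable borel"
      by (intro meas_mm meas_mat_adj mM)
    then have "(\<lambda>x. sq2 (sq2 (mat_adj (Mpot \<epsilon> \<gamma> \<mu> \<nu> \<psi> x) ** Mpot \<epsilon> \<gamma> \<mu> \<nu> \<psi> x))) \<in> borel_measurable borel"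
      by (intro meas_sq2)
    then show ?thesis by (simp add: Sx_def SM_def)
  qed
  have mV: "V \<in> borel_measurable borel" using V_meas by simp
  have mRr: "R_r \<epsilon> \<gamma> \<mu> \<nu> \<psi> \<in> borel_measurable lborel"
  proof -
    have "(\<lambda>x. block4 (Sx x) 0 0 0) \<in> borel_measurable borel"
      by (intro meas_block4 mS borel_measurable_const)
    then show ?thesis by (simp add: Rr[abs_def])
  qed
  have mRl: "R_l D \<beta> \<epsilon> \<gamma> \<mu> \<nu> \<psi> V \<in> borel_measurable lborel"
  proof -
    have "(\<lambda>y. block4 0 0 (- (Bi ** V y ** Sx y)) 0) \<in> borel_measurable borel"
      by (intro meas_block4 borel_measurable_uminus meas_mm mS mV borel_measurable_const)
    then show ?thesis by (simp add: Rl[abs_def])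
  qed
  have mG: "G \<in> borel_measurable borel" using G_A_facts(3)[OF nondeg lam_ness] by (simp add: G_def)
  have mdiff: "(\<lambda>p::real \<times> real. fst p - snd p) \<in> borel_measurable (lborel \<Otimes>\<^sub>M lborel)" by measurable
  have mk: "(\<lambda>p. k (fst p) (snd p)) \<in> borel_measurable (lborel \<Otimes>\<^sub>M lborel)"
    unfolding kk
    by (intro meas_mm measurable_compose[OF measurable_fst mRr] measurable_compose[OF measurable_snd mRl]
        measurable_compose[OF mdiff mG])
  have mk2: "(\<lambda>(x, y). k x y) \<in> borel_measurable (lborel \<Otimes>\<^sub>M lborel)"
    using mk by (simp add: case_prod_beta')
  obtain KG where KG: "\<And>t. norm (G t) \<le> KG" using G_A_facts(4)[OF nondeg lam_ness] by (auto simp: G_def)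
  have KG0: "KG \<ge> 0" using KG[of 0] norm_ge_zero order_trans by blast
  obtain KM where KM: "\<And>x. cmod (\<psi> x) \<le> C \<Longrightarrow> norm (Mpot \<epsilon> \<gamma> \<mu> \<nu> \<psi> x) \<le> KM * (cmod (\<psi> x))^2"
    using Mpot_bound[of C \<psi> \<epsilon> \<gamma> \<mu> \<nu>] C_pos by auto
  define KM' where "KM' = max KM 0"
  define E where "E = (\<lambda>x::real. exp (- (2 * a) * \<bar>x\<bar>))"
  have E0: "E x \<ge> 0" for x by (simp add: E_def)
  have psiC: "cmod (\<psi> x) \<le> C" for x
  proof -
    have "exp (- a * \<bar>x\<bar>) \<le> 1" using a_pos by simp
    then show ?thesis using decay[of x] C_pos by (smt (verit) mult_left_le)
  qed
  have psiE: "(cmod (\<psi> x))^2 \<le> C^2 * E x" for x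
  proof -
    have "(cmod (\<psi> x))^2 \<le> (C * exp (- a * \<bar>x\<bar>))^2"
      using decay[of x] by (intro power_mono) auto
    also have "\<dots> = C^2 * E x"
      by (simp add: E_def power_mult_distrib power2_eq_square exp_add[symmetric])
    finally show ?thesis .
  qed
  define c1 where "c1 = 8 * KM' * C^2"
  have c10: "c1 \<ge> 0" by (simp add: c1_def KM'_def)
  have nS: "(norm (Sx x))^2 \<le> c1 * E x" for x
  proof -
    have "(norm (Sx x))^2 \<le> 8 * norm (Mpot \<epsilon> \<gamma> \<mu> \<nu> \<psi> x)" unfolding Sx_def by (rule SM_norm)
    also have "\<dots> \<le> 8 * (KM' * (cmod (\<psi> x))^2)"
    proof -
      have "KM * (cmod (\<psi> x))^2 \<le> KM' * (cmod (\<psi> x))^2" by (intro mult_right_mono) (auto simp: KM'_def)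
      then show ?thesis using KM[OF psiC[of x]] by simp
    qed
    also have "\<dots> \<le> 8 * (KM' * (C^2 * E x))"
      using psiE[of x] by (intro mult_left_mono) (auto simp: KM'_def)
    finally show ?thesis by (simp add: c1_def mult_ac)
  qed
  define c2 where "c2 = 64 * 64 * 16 * KG * 16 * (8 * 8 * norm Bi * 2)"
  have c20: "c2 \<ge> 0" using KG0 by (simp add: c2_def)
  have nk: "norm (k x y) \<le> c2 * norm (Sx x) * norm (Sx y)" for x y
  proof -
    have nRr: "norm (R_r \<epsilon> \<gamma> \<mu> \<nu> \<psi> x) \<le> 16 * norm (Sx x)"
      using norm_block4_le[of "Sx x" 0 0 0] by (simp add: Rr)
    have "norm (Bi ** V y ** Sx y) \<le> 8 * norm (Bi ** V y) * norm (Sx y)" using norm_mm[of "Bi ** V y" "Sx y"] by simp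
    also have "\<dots> \<le> 8 * (8 * norm Bi * norm (V y)) * norm (Sx y)"
      using norm_mm[of Bi "V y"] by (intro mult_right_mono mult_left_mono) auto
    also have "\<dots> \<le> 8 * (8 * norm Bi * 2) * norm (Sx y)"
      using unitary_norm[OF V_unitary[of y]] by (intro mult_right_mono mult_left_mono) auto
    finally have nB: "norm (Bi ** V y ** Sx y) \<le> 8 * 8 * norm Bi * 2 * norm (Sx y)" by simp
    have nRl: "norm (R_l D \<beta> \<epsilon> \<gamma> \<mu> \<nu> \<psi> V y) \<le> 16 * (8 * 8 * norm Bi * 2 * norm (Sx y))"
      using norm_block4_le[of 0 0 "- (Bi ** V y ** Sx y)" 0] nB by (simp add: Rl)
    have "norm (k x y) \<le> 64 * norm (R_r \<epsilon> \<gamma> \<mu> \<nu> \<psi> x ** G (x - y)) * norm (R_l D \<beta> \<epsilon> \<gamma> \<mu> \<nu> \<psi> V y)"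
      unfolding kk using norm_mm[of "R_r \<epsilon> \<gamma> \<mu> \<nu> \<psi> x ** G (x - y)" "R_l D \<beta> \<epsilon> \<gamma> \<mu> \<nu> \<psi> V y"] by simp
    also have "\<dots> \<le> 64 * (64 * norm (R_r \<epsilon> \<gamma> \<mu> \<nu> \<psi> x) * norm (G (x - y))) * norm (R_l D \<beta> \<epsilon> \<gamma> \<mu> \<nu> \<psi> V y)"
      using norm_mm[of "R_r \<epsilon> \<gamma> \<mu> \<nu> \<psi> x" "G (x - y)"] by (intro mult_right_mono mult_left_mono) auto
    also have "\<dots> \<le> 64 * (64 * (16 * norm (Sx x)) * KG) * (16 * (8 * 8 * norm Bi * 2 * norm (Sx y)))"
      using nRr nRl KG[of "x - y"] KG0 by (intro mult_mono mult_left_mono) auto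
    also have "\<dots> = c2 * norm (Sx x) * norm (Sx y)" by (simp add: c2_def mult_ac)
    finally show ?thesis .
  qed
  have nk2: "(norm (k x y))^2 \<le> (c2^2 * c1^2) * (E x * E y)" for x y
  proof -
    have "(norm (k x y))^2 \<le> (c2 * norm (Sx x) * norm (Sx y))^2"
      using nk[of x y] by (intro power_mono) auto
    also have "\<dots> = c2^2 * ((norm (Sx x))^2 * (norm (Sx y))^2)" by (simp add: power_mult_distrib)
    also have "\<dots> \<le> c2^2 * ((c1 * E x) * (c1 * E y))"
      using nS[of x] nS[of y] c10 E0[of x] by (intro mult_left_mono mult_mono) auto
    finally show ?thesis by (simp add: power2_eq_square mult_ac)
  qed
  have int0: "integrable (lborel \<Otimes>\<^sub>M lborel) (\<lambda>p. (c2^2 * c1^2) * (case p of (x, y) \<Rightarrow> exp (- (2*a) * \<bar>x\<bar>) * exp (- (2*a) * \<bar>y\<bar>)))"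
    using integrable_exp_abs2[of "2*a"] a_pos by (intro integrable_mult_right) auto
  have int: "integrable (lborel \<Otimes>\<^sub>M lborel) (\<lambda>(x, y). (norm (k x y))^2)"
  proof (rule Bochner_Integration.integrable_bound[OF int0])
    show "(\<lambda>(x, y). (norm (k x y))^2) \<in> borel_measurable (lborel \<Otimes>\<^sub>M lborel)"
      using mk2 by measurable
    show "AE p in lborel \<Otimes>\<^sub>M lborel. norm ((\<lambda>(x, y). (norm (k x y))^2) p)
       \<le> norm ((c2^2 * c1^2) * (case p of (x, y) \<Rightarrow> exp (- (2*a) * \<bar>x\<bar>) * exp (- (2*a) * \<bar>y\<bar>)))"
    proof (rule AE_I2)
      fix p :: "real \<times> real"
      obtain x y where p: "p = (x, y)" by (cases p)
      have "0 \<le> (c2^2 * c1^2) * (E x * E y)" using E0 by simp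
      then show "norm ((\<lambda>(x, y). (norm (k x y))^2) p)
       \<le> norm ((c2^2 * c1^2) * (case p of (x, y) \<Rightarrow> exp (- (2*a) * \<bar>x\<bar>) * exp (- (2*a) * \<bar>y\<bar>)))"
        using nk2[of x y] by (simp add: p E_def)
    qed
  qed
  have HS: "HS_kernel k" unfolding HS_kernel_def using mk2 int by blast
  have "HS_integral_operator (BS_op D \<beta> \<delta> \<alpha> \<epsilon> \<gamma> \<mu> \<nu> \<psi> V lam) k"
    unfolding HS_integral_operator_def using HS by (simp add: BS_op_def k_def)
  then show ?thesis using part2 by (simp add: k_def)
qed


end
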